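(* Assume $\frac1{\alpha^2}\ge\frac45+\mu$ and $\beta^2\le\frac43-\mu$ for a constant $\mu>0$. There is $a_0>0$ depending only on $S$ and $\mu$ such that for all $0<a\le\min(a_0,\lambda/2)$ there is a constant $c^*$ depending only on $a$ and $\mu$ such that for every $t\ge0$, $$\mathbb E\left[\Gamma(x^s(t+1))\,\middle|\,x^s(t)\right]\le\left(1-\zeta\frac aN\right)\Gamma(x^s(t))+c^*,\qquad \zeta=\min\left\{\frac\mu4,\frac1{60}\right\}.$$
   Context: Weighted balls into weighted bins: $n$ bins with positive integer weights $N_1,\dots,N_n$, $N=\sum_iN_i$; $\mathcal D$ on $[n]$ is $(\alpha,\beta)$-biased, i.e. $\frac{N_i}{\alpha N}\le\Pr_{\mathcal D}[i]\le\frac{\beta N_i}{N}$. Ball weights $w(t)$ are i.i.d. from $\mathcal W$ on $[0,\infty)$ with $\mathbb E[\mathcal W]=1$ and $M(z)=\mathbb E[e^{z\mathcal W}]$ finite at $z=\lambda$ for some $\lambda>0$; $S\ge1$ is a constant with $M''(z)\le2S$ for all $|z|<\lambda/2$. Each round two bins are sampled independently from $\mathcal D$ and the ball goes to the sampled bin with smaller value $v_i(t-1)=w_i(t-1)/N_i$. Slot formulation: bin $i$ consists of $N_i$ unit slots; the normalized slot vector $x^s(t)\in\mathbb R^N$ has, for each slot of bin $i$, the entry $v_i(t)-\frac1N\sum_{t'\le t}w(t')$, indexed so that $x^s_1(t)\ge\dots\ge x^s_N(t)$. $\Phi(y)=\sum_je^{ay_j}$, $\Psi(y)=\sum_je^{-ay_j}$,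 $\Gamma=\Phi+\Psi$. *)

theory Defs
  imports "HOL-Probability.Probability"
begin

text \<open>Bins are indexed by 0..n-1; bin i has positive integer weight Nw i;
  w i is the current load (total ball weight) of bin i.\<close>

definition total_bin_weight :: "nat \<Rightarrow> (nat \<Rightarrow> nat) \<Rightarrow> nat" where
  "total_bin_weight n Nw = (\<Sum>i<n. Nw i)"

definition bin_value :: "(nat \<Rightarrow> nat) \<Rightarrow> (nat \<Rightarrow> real) \<Rightarrow> nat \<Rightarrow> real" where
  "bin_value Nw w i = w i / real (Nw i)"

definition norm_value :: "nat \<Rightarrow> (nat \<Rightarrow> nat) \<Rightarrow> (nat \<Rightarrow> real) \<Rightarrow> nat \<Rightarrow> real" where
  "norm_value n Nw w i = bin_value Nw w i - (\<Sum>k<n. w k) / real (total_bin_weight n Nw)"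

definition slot_vector :: "nat \<Rightarrow> (nat \<Rightarrow> nat) \<Rightarrow> (nat \<Rightarrow> real) \<Rightarrow> real list" where
  "slot_vector n Nw w =
     rev (sort (concat (map (\<lambda>i. replicate (Nw i) (norm_value n Nw w i)) [0..<n])))"

definition Phi :: "real \<Rightarrow> real list \<Rightarrow> real" where
  "Phi a ys = sum_list (map (\<lambda>y. exp (a * y)) ys)"

definition Psi :: "real \<Rightarrow> real list \<Rightarrow> real" where
  "Psi a ys = sum_list (map (\<lambda>y. exp (- a * y)) ys)"

definition Gamma :: "real \<Rightarrow> real list \<Rightarrow> real" where
  "Gamma a ys = Phi a ys + Psi a ys"

definition is_bin_dist :: "nat \<Rightarrow> (nat \<Rightarrow> real) \<Rightarrow> bool" where
  "is_bin_dist n p \<longleftrightarrow> (\<forall>i<n. 0 \<le> p i) \<and> (\<Sum>i<n. p i) = 1"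

definition biased :: "nat \<Rightarrow> (nat \<Rightarrow> nat) \<Rightarrow> (nat \<Rightarrow> real) \<Rightarrow> real \<Rightarrow> real \<Rightarrow> bool" where
  "biased n Nw p \<alpha> \<beta> \<longleftrightarrow>
     (\<forall>i<n. real (Nw i) / (\<alpha> * real (total_bin_weight n Nw)) \<le> p i
          \<and> p i \<le> \<beta> * real (Nw i) / real (total_bin_weight n Nw))"

definition chosen_bin :: "(nat \<Rightarrow> nat) \<Rightarrow> (nat \<Rightarrow> real) \<Rightarrow> (nat \<Rightarrow> nat \<Rightarrow> bool) \<Rightarrow> nat \<Rightarrow> nat \<Rightarrow> nat" where
  "chosen_bin Nw w tb i j =
     (if bin_value Nw w i < bin_value Nw w j then i
      else if bin_value Nw w j < bin_value Nw w i then j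
      else if tb i j then i else j)"

definition add_ball :: "(nat \<Rightarrow> real) \<Rightarrow> nat \<Rightarrow> real \<Rightarrow> (nat \<Rightarrow> real)" where
  "add_ball w k x = w(k := w k + x)"

text \<open>E[Gamma(x^s(t+1)) | state at time t], where the state is the load vector w\<close>
definition expected_next_Gamma ::
  "real \<Rightarrow> nat \<Rightarrow> (nat \<Rightarrow> nat) \<Rightarrow> (nat \<Rightarrow> real) \<Rightarrow> (nat \<Rightarrow> nat \<Rightarrow> bool) \<Rightarrow> real measure
     \<Rightarrow> (nat \<Rightarrow> real) \<Rightarrow> real" where
  "expected_next_Gamma a n Nw p tb W w =
     (\<Sum>i<n. \<Sum>j<n. p i * p j *
        (\<integral>x. Gamma a (slot_vector n Nw (add_ball w (chosen_bin Nw w tb i j) x)) \<partial>W))"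

definition mgf :: "real measure \<Rightarrow> real \<Rightarrow> real" where
  "mgf W z = (\<integral>x. exp (z * x) \<partial>W)"

definition weight_dist :: "real measure \<Rightarrow> real \<Rightarrow> real \<Rightarrow> bool" where
  "weight_dist W lam S \<longleftrightarrow>
     prob_space W \<and> sets W = sets borel \<and> (AE x in W. 0 \<le> x)
     \<and> integrable W (\<lambda>x. x) \<and> (\<integral>x. x \<partial>W) = 1
     \<and> lam > 0 \<and> integrable W (\<lambda>x. exp (lam * x))
     \<and> (\<forall>z. \<bar>z\<bar> < lam / 2 \<longrightarrow> deriv (deriv (mgf W)) z \<le> 2 * S)"

end

theory Submission
  imports Defs "HOL-Probability.Probability"
begin


lemma exp_taylor2_bounds:
  fixes u :: real
  shows "0 \<le> exp u - 1 - u" and "exp u - 1 - u \<le> u^2 * exp \<bar>u\<bar>"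
proof -
  show "0 \<le> exp u - 1 - u" using exp_ge_add_one_self[of u] by linarith
  show "exp u - 1 - u \<le> u^2 * exp \<bar>u\<bar>"
  proof (cases "u \<ge> 0")
    case True
    have h1: "exp (-u) \<ge> 1 - u" using exp_ge_add_one_self[of "-u"] by simp
    have "(1 - u) * exp u \<le> 1"
    proof -
      have "(1 - u) * exp u \<le> exp (-u) * exp u"
        using h1 by (intro mult_right_mono) auto
      also have "\<dots> = 1" by (simp add: exp_minus field_simps)
      finally show ?thesis .
    qed
    hence "exp u - 1 - u \<le> u * (exp u - 1)" by (simp add: algebra_simps)
    also have "\<dots> \<le> u * (u * exp u)"
    proof -
      have "exp u - 1 \<le> u * exp u"
      proof -
        have "exp u * (1 - u) \<le> 1" using \<open>(1 - u) * exp u \<le> 1\<close> by (simp add: mult.commute)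
        thus ?thesis by (simp add: algebra_simps)
      qed
      thus ?thesis using True by (intro mult_left_mono) auto
    qed
    finally show ?thesis using True by (simp add: power2_eq_square)
  next
    case False
    define v where "v = -u"
    have v: "v > 0" using False v_def by simp
    have h1: "exp v \<ge> 1 + v" by simp
    have "exp (-v) * (1 + v) \<le> 1"
    proof -
      have "exp (-v) * (1 + v) \<le> exp (-v) * exp v" using h1 by (intro mult_left_mono) auto
      also have "\<dots> = 1" by (simp add: exp_minus field_simps)
      finally show ?thesis .
    qed
    hence "exp (-v) - 1 + v \<le> v * (1 - exp (-v))" by (simp add: algebra_simps)
    also have "\<dots> \<le> v * v"
    proof -
      have "1 - exp (-v) \<le> v" using exp_ge_add_one_self[of "-v"] by simp
      thus ?thesis using v by (intro mult_left_mono) auto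
    qed
    also have "\<dots> \<le> v * v * exp v" using v by simp
    finally show ?thesis using v_def False by (simp add: power2_eq_square)
  qed
qed

lemma deriv_from_quadratic_bound:
  fixes f :: "real \<Rightarrow> real"
  assumes d: "d > 0" and b: "\<And>h. \<bar>h\<bar> \<le> d \<Longrightarrow> \<bar>f (t + h) - f t - h * L\<bar> \<le> K * h^2"
  shows "(f has_field_derivative L) (at t)"
proof -
  have "((\<lambda>y. (f y - f t) / (y - t) - L) \<longlongrightarrow> 0) (at t)"
  proof (rule Lim_null_comparison)
    show "\<forall>\<^sub>F y in at t. norm ((f y - f t) / (y - t) - L) \<le> \<bar>K\<bar> * \<bar>y - t\<bar>"
    proof -
      have "\<forall>\<^sub>F y in at t. dist y t < d" using d by (rule eventually_at_ball'[THEN eventually_mono]) (auto simp: dist_commute)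
      moreover have "\<forall>\<^sub>F y in at t. y \<noteq> t" by (simp add: eventually_at_filter)
      ultimately show ?thesis
      proof eventually_elim
        case (elim y)
        define h where "h = y - t"
        have hne: "h \<noteq> 0" using elim h_def by simp
        have hd: "\<bar>h\<bar> \<le> d" using elim h_def by (simp add: dist_real_def)
        have yy: "y = t + h" using h_def by simp
        have e: "(f y - f t) / (y - t) - L = (f (t + h) - f t - h * L) / h"
          using hne unfolding yy by (simp add: diff_divide_distrib)
        have "\<bar>(f (t + h) - f t - h * L) / h\<bar> \<le> K * h^2 / \<bar>h\<bar>"
          using b[OF hd] hne by (simp add: abs_divide divide_right_mono)
        also have "\<dots> \<le> \<bar>K\<bar> * \<bar>h\<bar>"
        proof -
          have "K * h^2 / \<bar>h\<bar> = K * \<bar>h\<bar>" using hne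
            by (simp add: power2_eq_square) (metis abs_mult_self_eq nonzero_mult_div_cancel_right abs_eq_0 mult.assoc times_divide_eq_right)
          also have "\<dots> \<le> \<bar>K\<bar> * \<bar>h\<bar>" by (intro mult_right_mono) auto
          finally show ?thesis .
        qed
        finally show ?case using e h_def by simp
      qed
    qed
    show "((\<lambda>y. \<bar>K\<bar> * \<bar>y - t\<bar>) \<longlongrightarrow> 0) (at t)"
    proof -
      have "((\<lambda>y. \<bar>K\<bar> * \<bar>y - t\<bar>) \<longlongrightarrow> \<bar>K\<bar> * \<bar>t - t\<bar>) (at t)"
        by (intro tendsto_intros)
      thus ?thesis by simp
    qed
  qed
  hence "((\<lambda>y. (f y - f t) / (y - t)) \<longlongrightarrow> L) (at t)"
    using LIM_zero_iff[of "\<lambda>y. (f y - f t) / (y - t)" L "at t"] by simp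
  thus ?thesis by (simp add: has_field_derivative_iff)
qed

lemma wd_facts:
  assumes "weight_dist W lam S"
  shows "prob_space W" "sets W = sets borel" "AE x in W. 0 \<le> x" "integrable W (\<lambda>x. x)"
    "(\<integral>x. x \<partial>W) = 1" "lam > 0" "integrable W (\<lambda>x. exp (lam * x))"
    "\<And>z. \<bar>z\<bar> < lam / 2 \<Longrightarrow> deriv (deriv (mgf W)) z \<le> 2 * S"
  using assms unfolding weight_dist_def by auto

lemma wd_meas:
  assumes "weight_dist W lam S" "f \<in> borel_measurable borel"
  shows "f \<in> borel_measurable W"
  using measurable_cong_sets[of W borel borel borel] wd_facts(2)[OF assms(1)] assms(2) by simp

lemma pow_le_exp:
  fixes x lam :: real
  assumes "x \<ge> 0" "lam > 0" "k \<le> 3"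
  shows "x^k \<le> (12/lam)^k * exp (lam * x / 4)"
proof -
  have "lam * x / 12 < exp (lam * x / 12)" by (rule exp_gt_self)
  hence x1: "x \<le> (12/lam) * exp (lam * x / 12)" using assms by (simp add: field_simps)
  have "x^k \<le> ((12/lam) * exp (lam * x / 12))^k" using x1 assms by (intro power_mono) auto
  also have "\<dots> = (12/lam)^k * exp (real k * (lam * x / 12))"
    by (simp only: power_mult_distrib exp_of_nat_mult)
  also have "\<dots> \<le> (12/lam)^k * exp (lam * x / 4)"
  proof -
    have "real k * (lam * x / 12) \<le> 3 * (lam * x / 12)"
      using assms by (intro mult_right_mono) auto
    thus ?thesis using assms by (intro mult_left_mono) auto
  qed
  finally show ?thesis .
qed

lemma int_pow_exp:
  assumes wd: "weight_dist W lam S" and k: "k \<le> 3" and s: "s \<le> 3 * lam / 4"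
  shows "integrable W (\<lambda>x. x^k * exp (s * x))"
proof -
  have lam: "lam > 0" using wd_facts[OF wd] by simp
  show ?thesis
proof (rule Bochner_Integration.integrable_bound[where f="\<lambda>x. (12/lam)^k * exp (lam * x)"])
  show "integrable W (\<lambda>x. (12/lam)^k * exp (lam * x))"
    using wd_facts(7)[OF wd] by simp
  show "(\<lambda>x. x^k * exp (s * x)) \<in> borel_measurable W" by (rule wd_meas[OF wd]) measurable
  show "AE x in W. norm (x^k * exp (s * x)) \<le> norm ((12/lam)^k * exp (lam * x))"
    using wd_facts(3)[OF wd]
  proof eventually_elim
    case (elim x)
    have "x^k * exp (s * x) \<le> (12/lam)^k * exp (lam * x / 4) * exp (3 * lam / 4 * x)"
    proof (intro mult_mono)
      show "x ^ k \<le> (12 / lam) ^ k * exp (lam * x / 4)" using pow_le_exp[OF elim lam k] .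
      have "s * x \<le> 3 * lam / 4 * x" using elim s by (intro mult_right_mono) auto
      thus "exp (s * x) \<le> exp (3 * lam / 4 * x)" by simp
      show "0 \<le> (12 / lam) ^ k * exp (lam * x / 4)" using lam by simp
    qed simp
    also have "\<dots> = (12/lam)^k * exp (lam * x)"
      by (simp add: mult.assoc exp_add[symmetric])
    finally show ?case using elim lam by simp
  qed
qed
qed

lemma int_exp:
  assumes wd: "weight_dist W lam S" and s: "s \<le> 3 * lam / 4"
  shows "integrable W (\<lambda>x. exp (s * x))"
  using int_pow_exp[OF wd _ s, of 0] by simp

definition Fm :: "real measure \<Rightarrow> nat \<Rightarrow> real \<Rightarrow> real" where
  "Fm W k t = (\<integral>x. x^k * exp (t * x) \<partial>W)"

lemma F_quad:
  assumes wd: "weight_dist W lam S" and k: "k \<le> 1" and t: "\<bar>t\<bar> \<le> lam / 2" and h: "\<bar>h\<bar> \<le> lam / 4"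
  shows "\<bar>Fm W k (t + h) - Fm W k t - h * Fm W (k+1) t\<bar> \<le> Fm W (k+2) (3 * lam / 4) * h^2"
proof -
  have lam: "lam > 0" using wd_facts[OF wd] by simp
  define D where "D x = x^k * exp ((t+h) * x) - x^k * exp (t * x) - h * (x^(k+1) * exp (t * x))" for x
  have i1: "integrable W (\<lambda>x. x^k * exp ((t+h) * x))"
    by (rule int_pow_exp[OF wd]) (use k t h lam in auto)
  have i2: "integrable W (\<lambda>x. x^k * exp (t * x))"
    by (rule int_pow_exp[OF wd]) (use k t lam in auto)
  have i3: "integrable W (\<lambda>x. x^(k+1) * exp (t * x))"
    by (rule int_pow_exp[OF wd]) (use k t lam in auto)
  have i4: "integrable W (\<lambda>x. x^(k+2) * exp (3 * lam / 4 * x))"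
    by (rule int_pow_exp[OF wd]) (use k in auto)
  have iD: "integrable W D" unfolding D_def using i1 i2 i3 by auto
  have eq: "Fm W k (t + h) - Fm W k t - h * Fm W (k+1) t = (\<integral>x. D x \<partial>W)"
    unfolding D_def Fm_def using i1 i2 i3 by simp
  have AEb: "AE x in W. 0 \<le> D x \<and> D x \<le> h^2 * (x^(k+2) * exp (3 * lam / 4 * x))"
    using wd_facts(3)[OF wd]
  proof eventually_elim
    case (elim x)
    have Dx: "D x = x^k * exp (t * x) * (exp (h * x) - 1 - h * x)"
      unfolding D_def by (simp add: distrib_right exp_add algebra_simps)
    have p: "0 \<le> x^k * exp (t * x)" using elim by simp
    have b1: "0 \<le> exp (h * x) - 1 - h * x" by (rule exp_taylor2_bounds(1))
    have b2: "exp (h * x) - 1 - h * x \<le> (h*x)^2 * exp \<bar>h * x\<bar>" by (rule exp_taylor2_bounds(2))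
    have "D x \<le> x^k * exp (t * x) * ((h*x)^2 * exp \<bar>h * x\<bar>)"
      unfolding Dx using p b2 by (intro mult_left_mono)
    also have "\<dots> = h^2 * (x^(k+2) * exp (t * x + \<bar>h\<bar> * x))"
      using elim by (simp add: exp_add abs_mult power_mult_distrib power_add power2_eq_square algebra_simps)
    also have "\<dots> \<le> h^2 * (x^(k+2) * exp (3 * lam / 4 * x))"
    proof -
      have "t * x + \<bar>h\<bar> * x \<le> 3 * lam / 4 * x"
      proof -
        have "t + \<bar>h\<bar> \<le> 3 * lam / 4" using t h by linarith
        hence "(t + \<bar>h\<bar>) * x \<le> 3 * lam / 4 * x" using elim by (intro mult_right_mono)
        thus ?thesis by (simp add: algebra_simps)
      qed
      thus ?thesis using elim by (intro mult_left_mono) auto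
    qed
    finally show ?case unfolding Dx using p b1 by simp
  qed
  have "0 \<le> (\<integral>x. D x \<partial>W)"
    using AEb by (intro integral_nonneg_AE) (auto elim: AE_mp)
  moreover have "(\<integral>x. D x \<partial>W) \<le> (\<integral>x. h^2 * (x^(k+2) * exp (3 * lam / 4 * x)) \<partial>W)"
    using AEb iD i4 by (intro integral_mono_AE) (auto elim: AE_mp)
  moreover have "(\<integral>x. h^2 * (x^(k+2) * exp (3 * lam / 4 * x)) \<partial>W) = h^2 * Fm W (k+2) (3 * lam / 4)"
    unfolding Fm_def by (rule integral_mult_right_zero)
  ultimately have "0 \<le> (\<integral>x. D x \<partial>W) \<and> (\<integral>x. D x \<partial>W) \<le> Fm W (k+2) (3 * lam / 4) * h^2"
    by (simp only: mult.commute)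
  thus ?thesis unfolding eq by (simp only: abs_of_nonneg)
qed

lemma F_deriv:
  assumes wd: "weight_dist W lam S" and k: "k \<le> 1" and t: "\<bar>t\<bar> \<le> lam / 2"
  shows "(Fm W k has_field_derivative Fm W (k+1) t) (at t)"
proof -
  have lam: "lam > 0" using wd_facts[OF wd] by simp
  show ?thesis
    by (rule deriv_from_quadratic_bound[where d = "lam/4" and K = "Fm W (k+2) (3 * lam / 4)"])
       (use lam F_quad[OF wd k t] in \<open>auto simp: mult.commute\<close>)
qed

lemma mgf_bound:
  assumes wd: "weight_dist W lam S" and z: "\<bar>z\<bar> \<le> lam / 2"
  shows "mgf W z \<le> 1 + z + S * z^2"
proof -
  have lam: "lam > 0" using wd_facts[OF wd] by simp
  interpret prob_space W using wd_facts(1)[OF wd] .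
  have M: "mgf W = Fm W 0" unfolding mgf_def Fm_def by (rule ext) simp
  have F00: "Fm W 0 0 = 1" unfolding Fm_def by (simp add: prob_space)
  have F10: "Fm W 1 0 = 1" unfolding Fm_def using wd_facts(5)[OF wd] by simp
  have d0: "(Fm W 0 has_field_derivative Fm W 1 t) (at t)" if "\<bar>t\<bar> \<le> lam/2" for t
    using F_deriv[OF wd _ that, of 0] by simp
  have d1: "(Fm W 1 has_field_derivative Fm W 2 t) (at t)" if "\<bar>t\<bar> \<le> lam/2" for t
    using F_deriv[OF wd _ that, of 1] by (simp add: numeral_2_eq_2)
  have F2: "Fm W 2 t \<le> 2 * S" if "\<bar>t\<bar> < lam/2" for t
  proof -
    have "(deriv (Fm W 0) has_field_derivative Fm W 2 t) (at t)"
    proof (rule has_field_derivative_transform_within_open[OF d1, where S="ball 0 (lam/2)"])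
      show "\<bar>t\<bar> \<le> lam/2" using that by simp
      show "open (ball (0::real) (lam/2))" by simp
      show "t \<in> ball 0 (lam/2)" using that by simp
      fix y :: real assume "y \<in> ball 0 (lam/2)"
      hence "\<bar>y\<bar> \<le> lam/2" by simp
      thus "Fm W 1 y = deriv (Fm W 0) y" using DERIV_imp_deriv[OF d0] by simp
    qed
    hence "deriv (deriv (Fm W 0)) t = Fm W 2 t" by (rule DERIV_imp_deriv)
    thus ?thesis using wd_facts(8)[OF wd that] M by simp
  qed
  define \<phi> where "\<phi> t = Fm W 0 t - 1 - t - S * t^2" for t
  define \<phi>' where "\<phi>' t = Fm W 1 t - 1 - 2 * S * t" for t
  define \<phi>'' where "\<phi>'' t = Fm W 2 t - 2 * S" for t
  have D\<phi>: "(\<phi> has_field_derivative \<phi>' t) (at t)" if "\<bar>t\<bar> \<le> lam/2" for t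
    unfolding \<phi>_def[abs_def] \<phi>'_def
    by (rule derivative_eq_intros d0[OF that] | simp)+
  have D\<phi>': "(\<phi>' has_field_derivative \<phi>'' t) (at t)" if "\<bar>t\<bar> \<le> lam/2" for t
    unfolding \<phi>'_def[abs_def] \<phi>''_def
    by (rule derivative_eq_intros d1[OF that] | simp)+
  have p0: "\<phi> 0 = 0" unfolding \<phi>_def using F00 by simp
  have p'0: "\<phi>' 0 = 0" unfolding \<phi>'_def using F10 by simp
  have p'': "\<phi>'' t \<le> 0" if "\<bar>t\<bar> < lam/2" for t unfolding \<phi>''_def using F2[OF that] by simp
  have "\<phi> z \<le> 0"
  proof (cases "z > 0")
    case True
    obtain \<xi> where x: "0 < \<xi>" "\<xi> < z" "\<phi> z - \<phi> 0 = (z - 0) * \<phi>' \<xi>"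
      using MVT2[OF True, of \<phi> \<phi>'] D\<phi> z by auto
    obtain \<eta> where e: "0 < \<eta>" "\<eta> < \<xi>" "\<phi>' \<xi> - \<phi>' 0 = (\<xi> - 0) * \<phi>'' \<eta>"
      using MVT2[OF x(1), of \<phi>' \<phi>''] D\<phi>' z x by auto
    have "\<phi>'' \<eta> \<le> 0" using p'' e x z by auto
    hence "\<phi>' \<xi> \<le> 0" using e p'0 x by (simp add: mult_nonneg_nonpos)
    thus ?thesis using x p0 True by (simp add: mult_nonneg_nonpos)
  next
    case False
    show ?thesis
    proof (cases "z = 0")
      case True thus ?thesis using p0 by simp
    next
      case False
      hence zn: "z < 0" using \<open>\<not> z > 0\<close> by simp
      obtain \<xi> where x: "z < \<xi>" "\<xi> < 0" "\<phi> 0 - \<phi> z = (0 - z) * \<phi>' \<xi>"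
        using MVT2[OF zn, of \<phi> \<phi>'] D\<phi> z by auto
      obtain \<eta> where e: "\<xi> < \<eta>" "\<eta> < 0" "\<phi>' 0 - \<phi>' \<xi> = (0 - \<xi>) * \<phi>'' \<eta>"
        using MVT2[OF x(2), of \<phi>' \<phi>''] D\<phi>' z x by auto
      have "\<phi>'' \<eta> \<le> 0" using p'' e x z by auto
      hence "\<phi>' \<xi> \<ge> 0" using e p'0 x by (simp add: mult_nonpos_nonpos)
      thus ?thesis using x p0 zn by (simp add: mult_nonpos_nonneg)
    qed
  qed
  thus ?thesis unfolding \<phi>_def M by simp
qed



lemma pair_bound:
  fixes \<pi> v d :: "'i \<Rightarrow> real"
  assumes fin: "finite I" and pos: "\<And>i. i\<in>I \<Longrightarrow> 0 \<le> \<pi> i"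
    and h: "\<And>i j. i\<in>I \<Longrightarrow> j\<in>I \<Longrightarrow> P i \<Longrightarrow> \<not> P j \<Longrightarrow> d i \<le> \<bar>v i - v j\<bar>"
  shows "2 * sum \<pi> {j\<in>I. \<not> P j} * (\<Sum>i\<in>{i\<in>I. P i}. \<pi> i * d i)
      \<le> (\<Sum>i\<in>I. \<Sum>j\<in>I. \<pi> i * \<pi> j * \<bar>v i - v j\<bar>)"
proof -
  define f where "f i j = (if P i \<and> \<not> P j then \<pi> i * \<pi> j * d i else 0)" for i j
  have pw: "f i j + f j i \<le> \<pi> i * \<pi> j * \<bar>v i - v j\<bar>" if "i\<in>I" "j\<in>I" for i j
  proof -
    have pp: "0 \<le> \<pi> i * \<pi> j" using pos that by simp
    consider "P i \<and> \<not> P j" | "P j \<and> \<not> P i" | "\<not> (P i \<and> \<not> P j) \<and> \<not> (P j \<and> \<not> P i)" by blast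
    thus ?thesis
    proof cases
      case 1
      have "\<pi> i * \<pi> j * d i \<le> \<pi> i * \<pi> j * \<bar>v i - v j\<bar>"
        using h[OF that] 1 pp by (intro mult_left_mono) auto
      thus ?thesis using 1 unfolding f_def by simp
    next
      case 2
      have "\<pi> j * \<pi> i * d j \<le> \<pi> j * \<pi> i * \<bar>v j - v i\<bar>"
        using h[OF that(2,1)] 2 pp by (intro mult_left_mono) (auto simp: mult.commute)
      thus ?thesis using 2 unfolding f_def by (simp add: mult.commute abs_minus_commute)
    next
      case 3
      hence "f i j = 0" "f j i = 0" unfolding f_def by auto
      thus ?thesis using pp by simp
    qed
  qed
  have s1: "(\<Sum>i\<in>I. \<Sum>j\<in>I. f i j) = sum \<pi> {j\<in>I. \<not> P j} * (\<Sum>i\<in>{i\<in>I. P i}. \<pi> i * d i)"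
  proof -
    have "(\<Sum>i\<in>I. \<Sum>j\<in>I. f i j) = (\<Sum>i\<in>I. if P i then \<pi> i * d i * sum \<pi> {j\<in>I. \<not> P j} else 0)"
    proof (rule sum.cong[OF refl])
      fix i assume "i \<in> I"
      show "(\<Sum>j\<in>I. f i j) = (if P i then \<pi> i * d i * sum \<pi> {j\<in>I. \<not> P j} else 0)"
        unfolding f_def using fin
        by (auto simp: sum.inter_filter sum_distrib_left mult_ac intro!: sum.cong)
    qed
    also have "\<dots> = (\<Sum>i\<in>{i\<in>I. P i}. \<pi> i * d i * sum \<pi> {j\<in>I. \<not> P j})"
      by (rule sum.inter_filter[OF fin, symmetric])
    also have "\<dots> = sum \<pi> {j\<in>I. \<not> P j} * (\<Sum>i\<in>{i\<in>I. P i}. \<pi> i * d i)"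
      by (simp add: sum_distrib_left sum_distrib_right mult_ac)
    finally show ?thesis .
  qed
  have s2: "(\<Sum>i\<in>I. \<Sum>j\<in>I. f j i) = (\<Sum>i\<in>I. \<Sum>j\<in>I. f i j)"
    by (rule sum.swap)
  have "(\<Sum>i\<in>I. \<Sum>j\<in>I. f i j + f j i) \<le> (\<Sum>i\<in>I. \<Sum>j\<in>I. \<pi> i * \<pi> j * \<bar>v i - v j\<bar>)"
    using pw by (intro sum_mono) auto
  moreover have "(\<Sum>i\<in>I. \<Sum>j\<in>I. f i j + f j i) = 2 * sum \<pi> {j\<in>I. \<not> P j} * (\<Sum>i\<in>{i\<in>I. P i}. \<pi> i * d i)"
    using s1 s2 by (simp add: sum.distrib)
  ultimately show ?thesis by simp
qed

lemma sum_split: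
  assumes "finite I"
  shows "sum f I = sum f {i\<in>I. P i} + sum f {i\<in>I. \<not> P i}"
proof -
  have "I = {i\<in>I. P i} \<union> {i\<in>I. \<not> P i}" by auto
  hence "sum f I = sum f ({i\<in>I. P i} \<union> {i\<in>I. \<not> P i})" by simp
  also have "\<dots> = sum f {i\<in>I. P i} + sum f {i\<in>I. \<not> P i}"
    using assms by (intro sum.union_disjoint) auto
  finally show ?thesis .
qed

lemma sum_sub_nonneg:
  fixes f :: "'i \<Rightarrow> real"
  assumes "finite I" "\<And>i. i \<in> I \<Longrightarrow> P i \<Longrightarrow> 0 \<le> f i" "\<And>i. i\<in>I \<Longrightarrow> Q i \<Longrightarrow> P i"
  shows "sum f {i\<in>I. Q i} \<le> sum f {i\<in>I. P i}"
  using assms by (intro sum_mono2) auto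

lemma tau_exists:
  fixes \<pi> x :: "'i \<Rightarrow> real"
  assumes fin: "finite I" and pos: "\<And>i. i\<in>I \<Longrightarrow> 0 \<le> \<pi> i" and s1: "sum \<pi> I = 1"
  shows "\<exists>\<tau>. 1/4 \<le> sum \<pi> {j\<in>I. \<not> \<tau> < x j} \<and> sum \<pi> {j\<in>I. x j < \<tau>} < 1/4"
proof -
  have ne: "I \<noteq> {}" using s1 by auto
  define T where "T = {t \<in> x ` I. 1/4 \<le> sum \<pi> {j\<in>I. \<not> t < x j}}"
  have Tf: "finite T" unfolding T_def using fin by auto
  have "Max (x ` I) \<in> T"
  proof -
    have "{j\<in>I. \<not> Max (x ` I) < x j} = I" using fin by (auto simp: not_less intro: Max_ge)
    thus ?thesis unfolding T_def using s1 fin ne by auto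
  qed
  hence Tne: "T \<noteq> {}" by auto
  define \<tau> where "\<tau> = Min T"
  have tT: "\<tau> \<in> T" unfolding \<tau>_def using Tf Tne by simp
  have "sum \<pi> {j\<in>I. x j < \<tau>} < 1/4"
  proof (rule ccontr)
    assume "\<not> ?thesis"
    hence ge: "1/4 \<le> sum \<pi> {j\<in>I. x j < \<tau>}" by simp
    define L where "L = {j\<in>I. x j < \<tau>}"
    have Lne: "L \<noteq> {}"
    proof
      assume "L = {}"
      hence "sum \<pi> {j\<in>I. x j < \<tau>} = 0" unfolding L_def by (metis sum.empty)
      thus False using ge by simp
    qed
    have Lf: "finite L" unfolding L_def using fin by auto
    define t' where "t' = Max (x ` L)"
    have t'L: "t' \<in> x ` L" unfolding t'_def using Lf Lne by simp
    have t'lt: "t' < \<tau>" using t'L unfolding L_def by auto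
    have eqs: "{j\<in>I. \<not> t' < x j} = L"
    proof
      show "{j\<in>I. \<not> t' < x j} \<subseteq> L" using t'lt unfolding L_def by auto
      show "L \<subseteq> {j\<in>I. \<not> t' < x j}" unfolding t'_def using Lf by (auto simp: not_less L_def intro: Max_ge)
    qed
    have "t' \<in> T" unfolding T_def using eqs ge L_def t'L by auto
    hence "\<tau> \<le> t'" unfolding \<tau>_def using Tf by simp
    thus False using t'lt by simp
  qed
  moreover have "1/4 \<le> sum \<pi> {j\<in>I. \<not> \<tau> < x j}" using tT unfolding T_def by simp
  ultimately show ?thesis by blast
qed

lemma R_le_AB:
  fixes \<pi> x :: "'i \<Rightarrow> real"
  assumes fin: "finite I" and pos: "\<And>i. i\<in>I \<Longrightarrow> 0 \<le> \<pi> i"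
  shows "(\<Sum>i\<in>I. \<pi> i * (exp (x i) + exp (- x i) - 2))
     \<le> (\<Sum>i\<in>{i\<in>I. 0 < x i}. \<pi> i * (exp (x i) - 1)) + (\<Sum>i\<in>{i\<in>I. x i < 0}. \<pi> i * (exp (- x i) - 1))"
proof -
  have "(\<Sum>i\<in>I. \<pi> i * (exp (x i) + exp (- x i) - 2))
     \<le> (\<Sum>i\<in>I. (if 0 < x i then \<pi> i * (exp (x i) - 1) else 0) + (if x i < 0 then \<pi> i * (exp (- x i) - 1) else 0))"
  proof (rule sum_mono)
    fix i assume i: "i \<in> I"
    have p: "0 \<le> \<pi> i" using pos i .
    consider "0 < x i" | "x i < 0" | "x i = 0" by linarith
    thus "\<pi> i * (exp (x i) + exp (- x i) - 2) \<le> (if 0 < x i then \<pi> i * (exp (x i) - 1) else 0) + (if x i < 0 then \<pi> i * (exp (- x i) - 1) else 0)"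
    proof cases
      case 1
      have "exp (- x i) \<le> 1" using 1 by simp
      hence "\<pi> i * (exp (x i) + exp (- x i) - 2) \<le> \<pi> i * (exp (x i) - 1)" using p by (intro mult_left_mono) auto
      thus ?thesis using 1 by simp
    next
      case 2
      have "exp (x i) \<le> 1" using 2 by simp
      hence "\<pi> i * (exp (x i) + exp (- x i) - 2) \<le> \<pi> i * (exp (- x i) - 1)" using p by (intro mult_left_mono) auto
      thus ?thesis using 2 by simp
    next
      case 3 thus ?thesis by simp
    qed
  qed
  also have "\<dots> = (\<Sum>i\<in>{i\<in>I. 0 < x i}. \<pi> i * (exp (x i) - 1)) + (\<Sum>i\<in>{i\<in>I. x i < 0}. \<pi> i * (exp (- x i) - 1))"
    by (simp add: sum.distrib sum.inter_filter[OF fin])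
  finally show ?thesis .
qed

lemma LHS_split:
  fixes \<pi> x :: "'i \<Rightarrow> real"
  shows "(\<Sum>i\<in>I. \<Sum>j\<in>I. \<pi> i * \<pi> j * (\<bar>exp (x i) - exp (x j)\<bar> + \<bar>exp (- x i) - exp (- x j)\<bar>))
    = (\<Sum>i\<in>I. \<Sum>j\<in>I. \<pi> i * \<pi> j * \<bar>exp (x i) - exp (x j)\<bar>) + (\<Sum>i\<in>I. \<Sum>j\<in>I. \<pi> i * \<pi> j * \<bar>exp (- x i) - exp (- x j)\<bar>)"
  by (simp add: distrib_left sum.distrib)

lemma E2_bound:
  fixes \<pi> x :: "'i \<Rightarrow> real"
  assumes fin: "finite I" and pos: "\<And>i. i\<in>I \<Longrightarrow> 0 \<le> \<pi> i"
  shows "2 * sum \<pi> {j\<in>I. \<not> x j < 0} * (\<Sum>i\<in>{i\<in>I. x i < 0}. \<pi> i * (exp (- x i) - 1))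
     \<le> (\<Sum>i\<in>I. \<Sum>j\<in>I. \<pi> i * \<pi> j * \<bar>exp (- x i) - exp (- x j)\<bar>)"
proof (rule pair_bound[OF fin pos, where P = "\<lambda>i. x i < 0" and v = "\<lambda>i. exp (- x i)" and d = "\<lambda>i. exp (- x i) - 1"])
  fix i j assume "x i < 0" "\<not> x j < 0"
  hence "exp (- x j) \<le> 1" by simp
  thus "exp (- x i) - 1 \<le> \<bar>exp (- x i) - exp (- x j)\<bar>" by linarith
qed simp

lemma E1_bound:
  fixes \<pi> x :: "'i \<Rightarrow> real"
  assumes fin: "finite I" and pos: "\<And>i. i\<in>I \<Longrightarrow> 0 \<le> \<pi> i"
  shows "2 * sum \<pi> {j\<in>I. \<not> t < x j} * (\<Sum>i\<in>{i\<in>I. t < x i}. \<pi> i * (exp (x i) - exp t))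
     \<le> (\<Sum>i\<in>I. \<Sum>j\<in>I. \<pi> i * \<pi> j * \<bar>exp (x i) - exp (x j)\<bar>)"
proof (rule pair_bound[OF fin pos, where P = "\<lambda>i. t < x i" and v = "\<lambda>i. exp (x i)" and d = "\<lambda>i. exp (x i) - exp t"])
  fix i j assume "t < x i" "\<not> t < x j"
  hence "exp (x j) \<le> exp t" by simp
  thus "exp (x i) - exp t \<le> \<bar>exp (x i) - exp (x j)\<bar>" by linarith
qed simp

lemma tangent_exp: "exp s * (1 + u - s) \<le> exp (u::real)"
proof -
  have "1 + (u - s) \<le> exp (u - s)" by (rule exp_ge_add_one_self)
  have "exp s * (1 + u - s) = exp s * (1 + (u - s))" by simp
  also have "\<dots> \<le> exp s * exp (u - s)" using \<open>1 + (u - s) \<le> exp (u - s)\<close> by (intro mult_left_mono) auto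
  also have "\<dots> = exp u" by (simp add: exp_diff)
  finally show ?thesis .
qed

lemma cube_exp: "3 * (exp t - 1) \<le> exp (3 * t) - (1::real)"
proof -
  define y where "y = exp t"
  have e: "exp (3 * t) = y^3" unfolding y_def by (metis exp_of_nat_mult of_nat_numeral)
  have "0 \<le> (y - 1)^2 * (y + 2)" unfolding y_def by simp
  hence "0 \<le> y^3 - 1 - 3 * (y - 1)" by (simp add: power2_eq_square power3_eq_cube algebra_simps)
  thus ?thesis using e y_def by simp
qed

lemma core_case2:
  fixes \<pi> x :: "'i \<Rightarrow> real"
  assumes fin: "finite I" and pos: "\<And>i. i\<in>I \<Longrightarrow> 0 \<le> \<pi> i" and s1: "sum \<pi> I = 1"
    and m0: "(\<Sum>i\<in>I. \<pi> i * x i) = 0" and lq: "sum \<pi> {j\<in>I. \<not> 0 < x j} < 1/4"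
  shows "(\<Sum>i\<in>I. \<pi> i * (exp (x i) + exp (- x i) - 2)) / 2
    \<le> (\<Sum>i\<in>I. \<Sum>j\<in>I. \<pi> i * \<pi> j * (\<bar>exp (x i) - exp (x j)\<bar> + \<bar>exp (- x i) - exp (- x j)\<bar>))"
proof -
  define A where "A = (\<Sum>i\<in>{i\<in>I. 0 < x i}. \<pi> i * (exp (x i) - 1))"
  define B where "B = (\<Sum>i\<in>{i\<in>I. x i < 0}. \<pi> i * (exp (- x i) - 1))"
  define E1 where "E1 = (\<Sum>i\<in>I. \<Sum>j\<in>I. \<pi> i * \<pi> j * \<bar>exp (x i) - exp (x j)\<bar>)"
  define E2 where "E2 = (\<Sum>i\<in>I. \<Sum>j\<in>I. \<pi> i * \<pi> j * \<bar>exp (- x i) - exp (- x j)\<bar>)"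
  have RAB: "(\<Sum>i\<in>I. \<pi> i * (exp (x i) + exp (- x i) - 2)) \<le> A + B"
    unfolding A_def B_def by (rule R_le_AB[OF fin pos])
  obtain \<tau> where t1: "1/4 \<le> sum \<pi> {j\<in>I. \<not> \<tau> < x j}" and t2: "sum \<pi> {j\<in>I. x j < \<tau>} < 1/4"
    using tau_exists[OF fin pos s1] by blast
  have tpos: "\<tau> > 0"
  proof (rule ccontr)
    assume "\<not> \<tau> > 0"
    hence "sum \<pi> {j\<in>I. \<not> \<tau> < x j} \<le> sum \<pi> {j\<in>I. \<not> 0 < x j}"
      by (intro sum_sub_nonneg[OF fin]) (use pos in auto)
    thus False using t1 lq by simp
  qed
  have Pge: "sum \<pi> {j\<in>I. \<not> x j < \<tau>} > 3/4"
    using sum_split[OF fin, of \<pi> "\<lambda>j. x j < \<tau>"] s1 t2 by simp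
  have Bpos: "0 \<le> B" unfolding B_def by (intro sum_nonneg) (use pos in \<open>auto intro!: mult_nonneg_nonneg\<close>)
  have posx: "(\<Sum>i\<in>{i\<in>I. 0 < x i}. \<pi> i * x i) \<ge> 3/4 * \<tau>"
  proof -
    have "3/4 * \<tau> \<le> sum \<pi> {j\<in>I. \<not> x j < \<tau>} * \<tau>" using Pge tpos by (intro mult_right_mono) auto
    also have "\<dots> = (\<Sum>i\<in>{j\<in>I. \<not> x j < \<tau>}. \<pi> i * \<tau>)" by (simp add: sum_distrib_right)
    also have "\<dots> \<le> (\<Sum>i\<in>{j\<in>I. \<not> x j < \<tau>}. \<pi> i * x i)"
      by (intro sum_mono mult_left_mono) (use pos in auto)
    also have "\<dots> \<le> (\<Sum>i\<in>{i\<in>I. 0 < x i}. \<pi> i * x i)"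
      by (intro sum_sub_nonneg[OF fin]) (use pos tpos in auto)
    finally show ?thesis .
  qed
  have negx: "(\<Sum>i\<in>{i\<in>I. x i < 0}. \<pi> i * (- x i)) = (\<Sum>i\<in>{i\<in>I. 0 < x i}. \<pi> i * x i)"
  proof -
    have "0 = (\<Sum>i\<in>I. \<pi> i * x i)" using m0 by simp
    also have "\<dots> = (\<Sum>i\<in>{i\<in>I. 0 < x i}. \<pi> i * x i) + (\<Sum>i\<in>{i\<in>I. \<not> 0 < x i}. \<pi> i * x i)"
      by (rule sum_split[OF fin])
    also have "(\<Sum>i\<in>{i\<in>I. \<not> 0 < x i}. \<pi> i * x i) = (\<Sum>i\<in>{i\<in>I. x i < 0}. \<pi> i * x i)"
    proof -
      have "(\<Sum>i\<in>{i\<in>I. \<not> 0 < x i}. \<pi> i * x i) = (\<Sum>i\<in>{i\<in>I. x i < 0}. \<pi> i * x i) + (\<Sum>i\<in>{i\<in>I. x i = 0}. \<pi> i * x i)"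
      proof -
        have "{i\<in>I. \<not> 0 < x i} = {i\<in>I. x i < 0} \<union> {i\<in>I. x i = 0}" by auto
        thus ?thesis using fin by (simp add: sum.union_disjoint) (subst sum.union_disjoint, auto)
      qed
      thus ?thesis by simp
    qed
    finally show ?thesis by (simp add: sum_negf)
  qed
  define q where "q = sum \<pi> {i\<in>I. x i < 0}"
  have q: "q < 1/4" "0 \<le> q"
  proof -
    have "q \<le> sum \<pi> {j\<in>I. \<not> 0 < x j}" unfolding q_def
      by (intro sum_sub_nonneg[OF fin]) (use pos in auto)
    thus "q < 1/4" using lq by simp
    show "0 \<le> q" unfolding q_def by (intro sum_nonneg) (use pos in auto)
  qed
  define c0 where "c0 = exp (3 * \<tau>) * (1 - 3 * \<tau>) - 1"
  have c0: "c0 \<le> 0"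
  proof -
    have "exp (3 * \<tau>) * (1 + 0 - 3 * \<tau>) \<le> exp 0" by (rule tangent_exp)
    thus ?thesis unfolding c0_def by simp
  qed
  have Bge: "B \<ge> (exp (3 * \<tau>) - 1) / 4"
  proof -
    have "B \<ge> (\<Sum>i\<in>{i\<in>I. x i < 0}. \<pi> i * (exp (3 * \<tau>) * (1 + (- x i) - 3 * \<tau>) - 1))"
      unfolding B_def
    proof (intro sum_mono mult_left_mono)
      fix i assume i: "i \<in> {i\<in>I. x i < 0}"
      show "0 \<le> \<pi> i" using pos i by auto
      have "exp (3 * \<tau>) * (1 + (- x i) - 3 * \<tau>) \<le> exp (- x i)" by (rule tangent_exp)
      thus "exp (3 * \<tau>) * (1 + - x i - 3 * \<tau>) - 1 \<le> exp (- x i) - 1" by simp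
    qed
    also have "(\<Sum>i\<in>{i\<in>I. x i < 0}. \<pi> i * (exp (3 * \<tau>) * (1 + (- x i) - 3 * \<tau>) - 1))
       = c0 * q + exp (3 * \<tau>) * (\<Sum>i\<in>{i\<in>I. x i < 0}. \<pi> i * (- x i))"
      unfolding c0_def q_def by (simp add: algebra_simps sum.distrib sum_distrib_left sum_distrib_right sum_subtractf sum_negf)
    finally have f1: "B \<ge> c0 * q + exp (3 * \<tau>) * (\<Sum>i\<in>{i\<in>I. x i < 0}. \<pi> i * (- x i))" .
    have f2: "c0 * q \<ge> c0 * (1/4)" using c0 q by (intro mult_left_mono_neg) auto
    have f3: "exp (3 * \<tau>) * (\<Sum>i\<in>{i\<in>I. x i < 0}. \<pi> i * (- x i)) \<ge> exp (3 * \<tau>) * (3/4 * \<tau>)"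
      using negx posx by (intro mult_left_mono) auto
    from f1 f2 f3 have "B \<ge> c0 * (1/4) + exp (3 * \<tau>) * (3/4 * \<tau>)" by linarith
    thus ?thesis unfolding c0_def by (simp add: algebra_simps)
  qed
  have Bge2: "B \<ge> 3/4 * (exp \<tau> - 1)" using Bge cube_exp[of \<tau>] by simp
  define X where "X = (\<Sum>i\<in>{i\<in>I. \<tau> < x i}. \<pi> i * (exp (x i) - exp \<tau>))"
  have Xpos: "0 \<le> X" unfolding X_def by (intro sum_nonneg) (use pos in \<open>auto intro!: mult_nonneg_nonneg\<close>)
  have XA: "X \<ge> A - (exp \<tau> - 1)"
  proof -
    have "A - (exp \<tau> - 1) * sum \<pi> {i\<in>I. 0 < x i} = (\<Sum>i\<in>{i\<in>I. 0 < x i}. \<pi> i * (exp (x i) - exp \<tau>))"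
      unfolding A_def by (simp add: algebra_simps sum_distrib_left sum_subtractf)
    also have "\<dots> \<le> (\<Sum>i\<in>{i\<in>I. \<tau> < x i}. \<pi> i * (exp (x i) - exp \<tau>))"
    proof -
      have "(\<Sum>i\<in>{i\<in>I. 0 < x i}. \<pi> i * (exp (x i) - exp \<tau>))
          = (\<Sum>i\<in>{i\<in>{i\<in>I. 0 < x i}. \<tau> < x i}. \<pi> i * (exp (x i) - exp \<tau>)) + (\<Sum>i\<in>{i\<in>{i\<in>I. 0 < x i}. \<not> \<tau> < x i}. \<pi> i * (exp (x i) - exp \<tau>))"
        by (rule sum_split) (use fin in auto)
      moreover have "(\<Sum>i\<in>{i\<in>{i\<in>I. 0 < x i}. \<not> \<tau> < x i}. \<pi> i * (exp (x i) - exp \<tau>)) \<le> 0"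
        by (intro sum_nonpos mult_nonneg_nonpos) (use pos in auto)
      moreover have "{i\<in>{i\<in>I. 0 < x i}. \<tau> < x i} = {i\<in>I. \<tau> < x i}" using tpos by auto
      ultimately show ?thesis by simp
    qed
    finally have "A - (exp \<tau> - 1) * sum \<pi> {i\<in>I. 0 < x i} \<le> X" unfolding X_def .
    moreover have "(exp \<tau> - 1) * sum \<pi> {i\<in>I. 0 < x i} \<le> (exp \<tau> - 1) * 1"
    proof (rule mult_left_mono)
      show "sum \<pi> {i\<in>I. 0 < x i} \<le> 1" using s1 sum_sub_nonneg[OF fin, of "\<lambda>_. True" \<pi> "\<lambda>i. 0 < x i"] pos by simp
      show "0 \<le> exp \<tau> - 1" using tpos by simp
    qed
    ultimately show ?thesis by simp
  qed
  have E1ge: "E1 \<ge> X / 2"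
  proof -
    have "2 * sum \<pi> {j\<in>I. \<not> \<tau> < x j} * X \<le> E1" unfolding X_def E1_def by (rule E1_bound[OF fin pos])
    moreover have "X / 2 \<le> 2 * sum \<pi> {j\<in>I. \<not> \<tau> < x j} * X"
    proof -
      have "1/4 * X \<le> sum \<pi> {j\<in>I. \<not> \<tau> < x j} * X" using t1 Xpos by (intro mult_right_mono) auto
      thus ?thesis by simp
    qed
    ultimately show ?thesis by simp
  qed
  have E2ge: "E2 \<ge> 3/2 * B"
  proof -
    have "2 * sum \<pi> {j\<in>I. \<not> x j < 0} * B \<le> E2" unfolding B_def E2_def by (rule E2_bound[OF fin pos])
    moreover have "sum \<pi> {j\<in>I. \<not> x j < 0} \<ge> 3/4"
      using sum_split[OF fin, of \<pi> "\<lambda>j. x j < 0"] s1 q unfolding q_def by simp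
    ultimately show ?thesis using Bpos mult_right_mono[of "3/4" "sum \<pi> {j\<in>I. \<not> x j < 0}" B] by simp
  qed
  have "(A + B) / 2 \<le> E1 + E2" using E1ge E2ge XA Bge2 Bpos by simp
  thus ?thesis using RAB LHS_split[of \<pi> x I] unfolding E1_def E2_def by simp
qed

lemma core_ineq:
  fixes \<pi> x :: "'i \<Rightarrow> real"
  assumes fin: "finite I" and pos: "\<And>i. i\<in>I \<Longrightarrow> 0 \<le> \<pi> i" and s1: "sum \<pi> I = 1"
    and m0: "(\<Sum>i\<in>I. \<pi> i * x i) = 0"
  shows "(\<Sum>i\<in>I. \<pi> i * (exp (x i) + exp (- x i) - 2)) / 2
    \<le> (\<Sum>i\<in>I. \<Sum>j\<in>I. \<pi> i * \<pi> j * (\<bar>exp (x i) - exp (x j)\<bar> + \<bar>exp (- x i) - exp (- x j)\<bar>))"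
proof -
  consider "sum \<pi> {j\<in>I. \<not> 0 < x j} < 1/4" | "sum \<pi> {j\<in>I. \<not> x j < 0} < 1/4"
    | "sum \<pi> {j\<in>I. \<not> 0 < x j} \<ge> 1/4" "sum \<pi> {j\<in>I. \<not> x j < 0} \<ge> 1/4" by linarith
  thus ?thesis
  proof cases
    case 1 from core_case2[OF fin pos s1 m0 1] show ?thesis by simp
  next
    case 2
    have m0': "(\<Sum>i\<in>I. \<pi> i * (- x i)) = 0" using m0 by (simp add: sum_negf)
    have "sum \<pi> {j\<in>I. \<not> 0 < - x j} < 1/4" using 2 by simp
    from core_case2[OF fin pos s1 m0' this]
    show ?thesis by (simp add: add.commute)
  next
    case 3
    define A where "A = (\<Sum>i\<in>{i\<in>I. 0 < x i}. \<pi> i * (exp (x i) - 1))"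
    define B where "B = (\<Sum>i\<in>{i\<in>I. x i < 0}. \<pi> i * (exp (- x i) - 1))"
    define E1 where "E1 = (\<Sum>i\<in>I. \<Sum>j\<in>I. \<pi> i * \<pi> j * \<bar>exp (x i) - exp (x j)\<bar>)"
    define E2 where "E2 = (\<Sum>i\<in>I. \<Sum>j\<in>I. \<pi> i * \<pi> j * \<bar>exp (- x i) - exp (- x j)\<bar>)"
    have RAB: "(\<Sum>i\<in>I. \<pi> i * (exp (x i) + exp (- x i) - 2)) \<le> A + B"
      unfolding A_def B_def by (rule R_le_AB[OF fin pos])
    have Apos: "0 \<le> A" unfolding A_def by (intro sum_nonneg) (use pos in \<open>auto intro!: mult_nonneg_nonneg\<close>)
    have Bpos: "0 \<le> B" unfolding B_def by (intro sum_nonneg) (use pos in \<open>auto intro!: mult_nonneg_nonneg\<close>)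
    have e1: "2 * sum \<pi> {j\<in>I. \<not> 0 < x j} * A \<le> E1"
      using E1_bound[OF fin pos, where t=0 and x=x] unfolding A_def E1_def by simp
    have e2: "2 * sum \<pi> {j\<in>I. \<not> x j < 0} * B \<le> E2"
      using E2_bound[OF fin pos, where x=x] unfolding B_def E2_def by simp
    have "1/4 * A \<le> sum \<pi> {j\<in>I. \<not> 0 < x j} * A" using 3 Apos by (intro mult_right_mono) auto
    moreover have "1/4 * B \<le> sum \<pi> {j\<in>I. \<not> x j < 0} * B" using 3 Bpos by (intro mult_right_mono) auto
    ultimately have "(A + B) / 2 \<le> E1 + E2" using e1 e2 by simp
    thus ?thesis using RAB LHS_split[of \<pi> x I] unfolding E1_def E2_def by simp
  qed
qed



lemma sum_list_sort_map:
  fixes f :: "'a::linorder \<Rightarrow> real"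
  shows "sum_list (map f (sort xs)) = sum_list (map f xs)"
proof -
  have "mset (map f (sort xs)) = mset (map f xs)" by simp
  hence "sum_mset (mset (map f (sort xs))) = sum_mset (mset (map f xs))" by simp
  thus ?thesis by (simp only: sum_mset_sum_list)
qed

lemma sum_concat_rep:
  fixes f' :: "real \<Rightarrow> real" and y :: "nat \<Rightarrow> real"
  shows "sum_list (map f' (concat (map (\<lambda>i. replicate (Nw i) (y i)) [0..<m])))
     = (\<Sum>i<m. real (Nw i) * f' (y i))"
  by (induction m) (auto simp: sum_list_replicate)

lemma Gamma_slot:
  "Gamma a (slot_vector n Nw w) =
     (\<Sum>j<n. real (Nw j) * (exp (a * norm_value n Nw w j) + exp (- a * norm_value n Nw w j)))"
proof -
  have g: "Gamma a ys = sum_list (map (\<lambda>y. exp (a * y) + exp (- a * y)) ys)" for ys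
    unfolding Gamma_def Phi_def Psi_def by (induction ys) auto
  define f where "f y = exp (a * y) + exp (- a * y)" for y
  define L where "L = concat (map (\<lambda>i. replicate (Nw i) (norm_value n Nw w i)) [0..<n])"
  have "Gamma a (slot_vector n Nw w) = sum_list (map f (rev (sort L)))"
    unfolding g slot_vector_def f_def L_def by simp
  also have "\<dots> = sum_list (map f L)"
    by (simp add: rev_map[symmetric] sum_list_sort_map)
  also have "\<dots> = (\<Sum>i<n. real (Nw i) * f (norm_value n Nw w i))"
    unfolding L_def by (rule sum_concat_rep)
  finally show ?thesis unfolding f_def .
qed

lemma sum_add_ball:
  assumes "k < n"
  shows "(\<Sum>i<n. add_ball w k x i) = (\<Sum>i<n. w i) + x"
proof -
  have "(\<Sum>i<n. add_ball w k x i) = (\<Sum>i<n. w i + (if i = k then x else 0))"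
    unfolding add_ball_def by (intro sum.cong) auto
  also have "\<dots> = (\<Sum>i<n. w i) + x" using assms by (simp add: sum.distrib)
  finally show ?thesis .
qed

lemma nv_add:
  assumes "k < n"
  shows "norm_value n Nw (add_ball w k x) j
    = norm_value n Nw w j + ((if j = k then x / real (Nw j) else 0) - x / real (total_bin_weight n Nw))"
  unfolding norm_value_def bin_value_def sum_add_ball[OF assms]
  by (simp add: add_ball_def add_divide_distrib)



lemma per_j:
  fixes e f Nj N a S :: real and b :: bool
  assumes e: "0 \<le> e" and f: "0 \<le> f" and Nj: "1 \<le> Nj" and NN: "Nj \<le> N" and a: "0 < a" and S: "0 \<le> S"
  defines "c \<equiv> a * ((if b then 1 / Nj else 0) - 1 / N)"
  shows "Nj * (e * (1 + c + S * c^2) + f * (1 + (- c) + S * (- c)^2))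
    \<le> Nj * (e + f) - a / N * (Nj * (e - f)) + S * a^2 / N^2 * (Nj * (e + f))
       + (if b then a * (e - f) + S * a^2 * (e + f) else 0)"
proof (cases b)
  case False
  hence c: "c = - (a / N)" unfolding c_def by simp
  have N0: "N > 0" using Nj NN by simp
  show ?thesis unfolding c using False N0 by (simp add: power2_eq_square field_simps)
next
  case True
  have N0: "N > 0" using Nj NN by simp
  have c: "c = a / Nj - a / N" unfolding c_def using True by (simp add: algebra_simps)
  have c0: "0 \<le> c" unfolding c using a Nj NN by (simp add: field_simps mult_left_mono)
  have c1: "c \<le> a / Nj" unfolding c using a N0 by simp
  have cc: "c^2 \<le> (a / Nj)^2" using c0 c1 by (intro power_mono) auto
  have "Nj * c^2 \<le> Nj * (a / Nj)^2" using cc Nj by (intro mult_left_mono) auto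
  also have "\<dots> = a^2 / Nj" using Nj by (simp add: power2_eq_square field_simps)
  also have "\<dots> \<le> a^2" using Nj a by (simp add: field_simps)
  finally have Njc: "Nj * c^2 \<le> a^2" .
  have ef: "0 \<le> e + f" using e f by simp
  have key: "S * (Nj * c^2) * (e + f) \<le> S * a^2 * (e + f)"
    using Njc S ef by (intro mult_right_mono mult_left_mono) auto
  have extra: "0 \<le> S * a^2 / N^2 * (Nj * (e + f))" using S ef Nj by simp
  have lhs: "Nj * (e * (1 + c + S * c^2) + f * (1 + (- c) + S * (- c)^2))
     = Nj * (e + f) + Nj * c * (e - f) + S * (Nj * c^2) * (e + f)"
    by (simp add: power2_eq_square algebra_simps)
  have Njc_eq: "Nj * c = a - a / N * Nj" unfolding c using Nj by (simp add: field_simps)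
  have "Nj * c * (e - f) = a * (e - f) - a / N * (Nj * (e - f))"
    unfolding Njc_eq by (simp add: algebra_simps diff_divide_distrib)
  thus ?thesis unfolding lhs using key extra True by simp
qed

lemma integral_step:
  fixes w :: "nat \<Rightarrow> real"
  assumes wd: "weight_dist W lam S" and S: "0 \<le> S" and a: "0 < a" "a \<le> lam / 2"
    and k: "k < n" and Npos: "\<forall>i<n. 0 < Nw i"
  defines "N \<equiv> real (total_bin_weight n Nw)"
    and "e \<equiv> \<lambda>j. exp (a * norm_value n Nw w j)" and "f \<equiv> \<lambda>j. exp (- a * norm_value n Nw w j)"
  shows "(\<integral>x. Gamma a (slot_vector n Nw (add_ball w k x)) \<partial>W)
    \<le> (\<Sum>j<n. real (Nw j) * (e j + f j)) - a / N * (\<Sum>j<n. real (Nw j) * (e j - f j))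
       + S * a^2 / N^2 * (\<Sum>j<n. real (Nw j) * (e j + f j)) + (a * (e k - f k) + S * a^2 * (e k + f k))"
proof -
  have lam: "lam > 0" using wd_facts[OF wd] by simp
  have NjN: "real (Nw j) \<le> N" if "j < n" for j
  proof -
    have "Nw j \<le> (\<Sum>i<n. Nw i)" using that by (intro member_le_sum) auto
    hence "real (Nw j) \<le> real (\<Sum>i<n. Nw i)" by (simp only: of_nat_le_iff)
    thus ?thesis unfolding N_def total_bin_weight_def .
  qed
  have Nj1: "1 \<le> real (Nw j)" if "j < n" for j using Npos that by (simp add: Suc_le_eq)
  have N1: "1 \<le> N" using NjN[OF k] Nj1[OF k] by simp
  define d where "d j = (if j = k then 1 / real (Nw j) else 0) - 1 / N" for j
  have dabs: "\<bar>a * d j\<bar> \<le> lam / 2" if "j < n" for j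
  proof -
    have "\<bar>d j\<bar> \<le> 1"
    proof (cases "j = k")
      case True
      have "1 / N \<le> 1 / real (Nw j)" using NjN[OF that] Nj1[OF that] by (simp add: frac_le)
      moreover have "1 / real (Nw j) \<le> 1" using Nj1[OF that] by simp
      moreover have "0 \<le> 1 / N" using N1 by simp
      moreover have "d j = 1 / real (Nw j) - 1 / N" unfolding d_def using True by simp
      ultimately show ?thesis unfolding abs_le_iff by linarith
    next
      case False
      thus ?thesis unfolding d_def using N1 by simp
    qed
    hence "\<bar>a * d j\<bar> \<le> a * 1" using a by (simp add: abs_mult mult_left_mono)
    thus ?thesis using a by simp
  qed
  have integrand: "Gamma a (slot_vector n Nw (add_ball w k x))
      = (\<Sum>j<n. real (Nw j) * (e j * exp ((a * d j) * x) + f j * exp ((- (a * d j)) * x)))" for x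
    unfolding Gamma_slot
  proof (rule sum.cong[OF refl])
    fix j assume "j \<in> {..<n}"
    have dd: "(if j = k then x / real (Nw j) else 0) - x / N = d j * x"
      unfolding d_def by (simp add: algebra_simps)
    show "real (Nw j) * (exp (a * norm_value n Nw (add_ball w k x) j) + exp (- a * norm_value n Nw (add_ball w k x) j))
        = real (Nw j) * (e j * exp (a * d j * x) + f j * exp (- (a * d j) * x))"
    proof -
      define y where "y = norm_value n Nw w j"
      have x1: "exp (a * (y + d j * x)) = exp (a * y) * exp (a * d j * x)"
        by (simp add: distrib_left exp_add mult.assoc mult.commute mult.left_commute)
      have x2: "exp (- a * (y + d j * x)) = exp (- a * y) * exp (- (a * d j) * x)"
      proof -
        have "- a * (y + d j * x) = - a * y + (- (a * d j) * x)" by (simp add: algebra_simps)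
        thus ?thesis by (simp only: exp_add)
      qed
      show ?thesis
        unfolding nv_add[OF k] e_def f_def N_def[symmetric] dd y_def[symmetric] x1 x2 by simp
    qed
  qed
  have intj: "integrable W (\<lambda>x. real (Nw j) * (e j * exp ((a * d j) * x) + f j * exp ((- (a * d j)) * x)))"
    if "j < n" for j
  proof -
    have "a * d j \<le> 3 * lam / 4" "- (a * d j) \<le> 3 * lam / 4" using dabs[OF that] lam by auto
    hence i1: "integrable W (\<lambda>x. exp ((a * d j) * x))" and i2: "integrable W (\<lambda>x. exp ((- (a * d j)) * x))"
      by (intro int_exp[OF wd]; simp)+
    show ?thesis
      by (intro integrable_mult_right integrable_add) (use i1 i2 in auto)
  qed
  have "(\<integral>x. Gamma a (slot_vector n Nw (add_ball w k x)) \<partial>W)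
     = (\<Sum>j<n. real (Nw j) * (e j * mgf W (a * d j) + f j * mgf W (- (a * d j))))"
  proof -
    have "(\<integral>x. Gamma a (slot_vector n Nw (add_ball w k x)) \<partial>W)
       = (\<Sum>j<n. (\<integral>x. real (Nw j) * (e j * exp ((a * d j) * x) + f j * exp ((- (a * d j)) * x)) \<partial>W))"
      unfolding integrand by (rule Bochner_Integration.integral_sum) (use intj in auto)
    also have "\<dots> = (\<Sum>j<n. real (Nw j) * (e j * mgf W (a * d j) + f j * mgf W (- (a * d j))))"
    proof (rule sum.cong[OF refl])
      fix j assume j: "j \<in> {..<n}"
      have "\<bar>a * d j\<bar> \<le> lam / 2" using dabs j by auto
      hence "a * d j \<le> 3 * lam / 4" "- (a * d j) \<le> 3 * lam / 4" using lam by (auto simp: abs_le_iff)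
      hence i1: "integrable W (\<lambda>x. exp ((a * d j) * x))" and i2: "integrable W (\<lambda>x. exp ((- (a * d j)) * x))"
        by (intro int_exp[OF wd]; simp)+
      show "(\<integral>x. real (Nw j) * (e j * exp ((a * d j) * x) + f j * exp ((- (a * d j)) * x)) \<partial>W)
          = real (Nw j) * (e j * mgf W (a * d j) + f j * mgf W (- (a * d j)))"
        unfolding mgf_def using i1 i2 by (simp add: integral_mult_right_zero)
    qed
    finally show ?thesis .
  qed
  also have "\<dots> \<le> (\<Sum>j<n. real (Nw j) * (e j + f j) - a / N * (real (Nw j) * (e j - f j))
       + S * a^2 / N^2 * (real (Nw j) * (e j + f j))
       + (if j = k then a * (e j - f j) + S * a^2 * (e j + f j) else 0))"
  proof (rule sum_mono)
    fix j assume j: "j \<in> {..<n}"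
    hence jn: "j < n" by simp
    have m1: "mgf W (a * d j) \<le> 1 + a * d j + S * (a * d j)^2" using mgf_bound[OF wd] dabs[OF jn] by simp
    have m2: "mgf W (- (a * d j)) \<le> 1 + (- (a * d j)) + S * (- (a * d j))^2"
      by (rule mgf_bound[OF wd]) (use dabs[OF jn] in simp)
    have "real (Nw j) * (e j * mgf W (a * d j) + f j * mgf W (- (a * d j)))
       \<le> real (Nw j) * (e j * (1 + a * d j + S * (a * d j)^2) + f j * (1 + (- (a * d j)) + S * (- (a * d j))^2))"
      using m1 m2 unfolding e_def f_def by (intro mult_left_mono add_mono) auto
    also have "\<dots> \<le> real (Nw j) * (e j + f j) - a / N * (real (Nw j) * (e j - f j))
       + S * a^2 / N^2 * (real (Nw j) * (e j + f j))
       + (if j = k then a * (e j - f j) + S * a^2 * (e j + f j) else 0)"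
      unfolding d_def
      by (rule per_j) (use Nj1[OF jn] NjN[OF jn] a S in \<open>auto simp: e_def f_def\<close>)
    finally show "real (Nw j) * (e j * mgf W (a * d j) + f j * mgf W (- (a * d j)))
       \<le> real (Nw j) * (e j + f j) - a / N * (real (Nw j) * (e j - f j))
       + S * a^2 / N^2 * (real (Nw j) * (e j + f j))
       + (if j = k then a * (e j - f j) + S * a^2 * (e j + f j) else 0)" .
  qed
  also have "\<dots> = (\<Sum>j<n. real (Nw j) * (e j + f j)) - a / N * (\<Sum>j<n. real (Nw j) * (e j - f j))
       + S * a^2 / N^2 * (\<Sum>j<n. real (Nw j) * (e j + f j)) + (a * (e k - f k) + S * a^2 * (e k + f k))"
    using k by (simp add: sum.distrib sum_subtractf sum_distrib_left)
  finally show ?thesis .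
qed



lemma chosen_mem: "chosen_bin Nw w tb i j = i \<or> chosen_bin Nw w tb i j = j"
  unfolding chosen_bin_def by auto

lemma chosen_min:
  fixes G0 :: "real \<Rightarrow> real"
  assumes mono: "\<And>u v. u \<le> v \<Longrightarrow> G0 u \<le> G0 v"
  shows "G0 (bin_value Nw w (chosen_bin Nw w tb i j)) = min (G0 (bin_value Nw w i)) (G0 (bin_value Nw w j))"
proof -
  consider "bin_value Nw w i < bin_value Nw w j" | "bin_value Nw w j < bin_value Nw w i"
    | "bin_value Nw w i = bin_value Nw w j" by linarith
  thus ?thesis
  proof cases
    case 1 thus ?thesis unfolding chosen_bin_def using mono[of "bin_value Nw w i" "bin_value Nw w j"] by (simp add: min_def)
  next
    case 2 thus ?thesis unfolding chosen_bin_def using mono[of "bin_value Nw w j" "bin_value Nw w i"] by (auto simp: min_def)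
  next
    case 3 thus ?thesis unfolding chosen_bin_def by auto
  qed
qed

lemma min_abs: "min (u::real) v = (u + v - \<bar>u - v\<bar>) / 2"
  by (simp add: min_def abs_if)

lemma dev_bound:
  fixes p q g :: real
  assumes "5/6 * q \<le> p" "p \<le> 7/6 * q" "0 \<le> q"
  shows "(p - q) * g \<le> 1/6 * q * \<bar>g\<bar>"
proof (cases "g \<ge> 0")
  case True
  have "(p - q) * g \<le> (1/6 * q) * g" using assms True by (intro mult_right_mono) auto
  thus ?thesis using True by simp
next
  case False
  have "(p - q) * g = (q - p) * (- g)" by (simp add: algebra_simps)
  also have "\<dots> \<le> (1/6 * q) * (- g)" using assms False by (intro mult_right_mono) auto
  finally show ?thesis using False by simp
qed

lemma final_arith:
  fixes Gm N a S D Ex z :: real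
  assumes G: "0 \<le> Gm" and N: "1 \<le> N" and a: "0 < a" and S: "0 \<le> S" and aS: "40 * S * a \<le> 1"
    and D: "(Gm / N - 2) / 2 \<le> D"
    and Ex: "Ex \<le> Gm + S * a^2 / N^2 * Gm + 7/3 * S * a^2 * (Gm / N) - 7/30 * a * D"
    and z: "z \<le> 1/60" "0 \<le> z"
  shows "Ex \<le> (1 - z * a / N) * Gm + a"
proof -
  define u where "u = Gm / N"
  have u: "0 \<le> u" unfolding u_def using G N by simp
  have t1: "S * a^2 / N^2 * Gm \<le> S * a^2 * u"
  proof -
    have "S * a^2 / N^2 * Gm = S * a^2 * (u / N)" unfolding u_def by (simp add: power2_eq_square)
    also have "\<dots> \<le> S * a^2 * u"
    proof (intro mult_left_mono)
      have "u * 1 \<le> u * N" using u N by (intro mult_left_mono) auto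
      thus "u / N \<le> u" using N by (simp add: divide_le_eq)
    qed (use S in auto)
    finally show ?thesis .
  qed
  have t2: "S * a^2 * u \<le> 1/40 * a * u"
  proof -
    have "S * a^2 * u = (S * a) * (a * u)" by (simp add: power2_eq_square)
    also have "\<dots> \<le> (1/40) * (a * u)" using aS a u by (intro mult_right_mono) auto
    finally show ?thesis by simp
  qed
  have t3: "- (7/30 * a * D) \<le> - (7/30 * a * ((u - 2) / 2))"
    using D a unfolding u_def by (simp add: mult_left_mono)
  have "Ex \<le> Gm + 10/3 * (S * a^2 * u) - 7/30 * a * ((u - 2) / 2)"
  proof -
    have Ex': "Ex \<le> Gm + S * a^2 / N^2 * Gm + 7/3 * S * a^2 * u - 7/30 * a * D" using Ex unfolding u_def .
    have e: "7/3 * S * a^2 * u = 7/3 * (S * a^2 * u)" by simp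
    show ?thesis using Ex' e t1 t3 by linarith
  qed
  also have "\<dots> \<le> Gm + 10/3 * (1/40 * a * u) - 7/30 * a * ((u - 2) / 2)" using t2 by linarith
  also have "\<dots> = Gm - 1/30 * (a * u) + 7/30 * a" by (simp add: field_simps)
  also have "\<dots> \<le> Gm - z * (a * u) + a"
  proof -
    have "z * (a * u) \<le> 1/60 * (a * u)" using z a u by (intro mult_right_mono) auto
    moreover have "0 \<le> a * u" using a u by simp
    ultimately show ?thesis using a by linarith
  qed
  also have "\<dots> = (1 - z * a / N) * Gm + a" unfolding u_def using N by (simp add: algebra_simps)
  finally show ?thesis .
qed

lemma abs_sinh_split:
  fixes a y1 y2 :: real
  assumes "0 < a"
  shows "\<bar>(exp (a * y1) - exp (- a * y1)) - (exp (a * y2) - exp (- a * y2))\<bar>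
     = \<bar>exp (a * y1) - exp (a * y2)\<bar> + \<bar>exp (- a * y1) - exp (- a * y2)\<bar>"
proof (cases "y1 \<le> y2")
  case True
  have "a * y1 \<le> a * y2" using True assms by (intro mult_left_mono) auto
  hence h1: "exp (a * y1) \<le> exp (a * y2)" and h2: "exp (- a * y2) \<le> exp (- a * y1)" by auto
  thus ?thesis by linarith
next
  case False
  have "a * y2 \<le> a * y1" using False assms by (intro mult_left_mono) auto
  hence h1: "exp (a * y2) \<le> exp (a * y1)" and h2: "exp (- a * y1) \<le> exp (- a * y2)" by auto
  thus ?thesis by linarith
qed

lemma double_sum_const:
  fixes p :: "nat \<Rightarrow> real"
  assumes "sum p I = 1"
  shows "(\<Sum>i\<in>I. \<Sum>j\<in>I. p i * p j * K) = K"
proof -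
  have "(\<Sum>i\<in>I. \<Sum>j\<in>I. p i * p j * K) = (\<Sum>i\<in>I. p i * K * sum p I)"
    by (simp add: sum_distrib_left sum_distrib_right mult_ac)
  also have "\<dots> = K" using assms by (simp add: sum_distrib_right[symmetric])
  finally show ?thesis .
qed

lemma double_sum_sym:
  fixes p g :: "nat \<Rightarrow> real"
  assumes "sum p I = 1"
  shows "(\<Sum>i\<in>I. \<Sum>j\<in>I. p i * p j * (g i + g j)) = 2 * (\<Sum>i\<in>I. p i * g i)"
proof -
  have a1: "(\<Sum>i\<in>I. \<Sum>j\<in>I. p i * p j * g i) = (\<Sum>i\<in>I. p i * g i)"
  proof -
    have "(\<Sum>i\<in>I. \<Sum>j\<in>I. p i * p j * g i) = (\<Sum>i\<in>I. p i * g i * sum p I)"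
      by (simp add: sum_distrib_left mult_ac)
    thus ?thesis using assms by simp
  qed
  have a2: "(\<Sum>i\<in>I. \<Sum>j\<in>I. p i * p j * g j) = (\<Sum>j\<in>I. p j * g j)"
  proof -
    have "(\<Sum>i\<in>I. \<Sum>j\<in>I. p i * p j * g j) = (\<Sum>i\<in>I. p i * (\<Sum>j\<in>I. p j * g j))"
      by (simp add: sum_distrib_left mult_ac)
    also have "\<dots> = (\<Sum>j\<in>I. p j * g j)" using assms by (simp add: sum_distrib_right[symmetric])
    finally show ?thesis .
  qed
  show ?thesis using a1 a2 by (simp add: distrib_left sum.distrib)
qed

lemma main_bound:
  fixes w :: "nat \<Rightarrow> real"
  assumes Npos: "\<forall>i<n. 0 < Nw i" and n: "0 < n" and al: "\<alpha> \<ge> 1" and be: "\<beta> \<ge> 1"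
    and pd: "is_bin_dist n p" and bi: "biased n Nw p \<alpha> \<beta>"
    and ha: "1 / \<alpha>\<^sup>2 \<ge> 4/5 + \<mu>" and hb: "\<beta>\<^sup>2 \<le> 4/3 - \<mu>" and mu: "\<mu> > 0"
    and wd: "weight_dist W lam S" and S: "S \<ge> 1" and a: "0 < a" "a \<le> 1 / (40 * S)" "a \<le> lam / 2"
  shows "expected_next_Gamma a n Nw p tb W w
     \<le> (1 - min (\<mu> / 4) (1 / 60) * a / real (total_bin_weight n Nw)) * Gamma a (slot_vector n Nw w) + a"
proof -
  define N where "N = real (total_bin_weight n Nw)"
  define y where "y j = norm_value n Nw w j" for j
  define e where "e j = exp (a * y j)" for j
  define f where "f j = exp (- a * y j)" for j
  define g where "g j = e j - f j" for j
  define cc where "cc j = e j + f j" for j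
  define Gm where "Gm = (\<Sum>j<n. real (Nw j) * cc j)"
  define GG where "GG = (\<Sum>j<n. real (Nw j) * g j)"
  define \<pi> where "\<pi> j = real (Nw j) / N" for j
  define ch where "ch i j = chosen_bin Nw w tb i j" for i j
  define K where "K = Gm - a / N * GG + S * a^2 / N^2 * Gm"
  have S0: "0 \<le> S" using S by simp
  have aS: "40 * S * a \<le> 1" using a S by (simp add: field_simps)
  have p0: "\<And>i. i < n \<Longrightarrow> 0 \<le> p i" and p1: "(\<Sum>i<n. p i) = 1" using pd unfolding is_bin_dist_def by auto
  have NjN: "real (Nw j) \<le> N" if "j < n" for j
  proof -
    have "Nw j \<le> (\<Sum>i<n. Nw i)" using that by (intro member_le_sum) auto
    hence "real (Nw j) \<le> real (\<Sum>i<n. Nw i)" by (simp only: of_nat_le_iff)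
    thus ?thesis unfolding N_def total_bin_weight_def .
  qed
  have Nj1: "1 \<le> real (Nw j)" if "j < n" for j using Npos that by (simp add: Suc_le_eq)
  have N1: "1 \<le> N" using NjN[OF n] Nj1[OF n] by simp
  have Nsum: "(\<Sum>j<n. real (Nw j)) = N" unfolding N_def total_bin_weight_def by simp
  have \<pi>0: "0 \<le> \<pi> j" for j unfolding \<pi>_def using N1 by simp
  have \<pi>1: "(\<Sum>j<n. \<pi> j) = 1" unfolding \<pi>_def using Nsum N1 by (simp add: sum_divide_distrib[symmetric])
  have Gam: "Gamma a (slot_vector n Nw w) = Gm" unfolding Gamma_slot Gm_def cc_def e_def f_def y_def by simp
  have ia: "5/6 \<le> 1 / \<alpha>"
  proof (rule ccontr)
    assume "\<not> ?thesis"
    hence "1/\<alpha> < 5/6" by simp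
    moreover have "0 < 1/\<alpha>" using al by simp
    ultimately have "(1/\<alpha>)^2 < (5/6)^2" by (intro power_strict_mono) auto
    thus False using ha mu by (simp add: power_divide)
  qed
  have ia2: "4/5 \<le> (1/\<alpha>)^2" using ha mu by (simp add: power_divide)
  have ib: "\<beta> \<le> 7/6"
  proof (rule ccontr)
    assume "\<not> ?thesis"
    hence "7/6 < \<beta>" by simp
    hence "(7/6)^2 < \<beta>^2" by (intro power_strict_mono) auto
    moreover have "(7/6::real)^2 = 49/36" by (simp add: power2_eq_square)
    ultimately show False using hb mu by linarith
  qed
  have plo: "\<pi> i / \<alpha> \<le> p i" "p i \<le> \<beta> * \<pi> i" if "i < n" for i
    using bi that unfolding biased_def \<pi>_def N_def by (auto simp: field_simps)
  have plo2: "5/6 * \<pi> i \<le> p i" if "i < n" for i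
  proof -
    have "5/6 * \<pi> i \<le> (1/\<alpha>) * \<pi> i" using ia \<pi>0 by (intro mult_right_mono) auto
    moreover have "(1/\<alpha>) * \<pi> i = \<pi> i / \<alpha>" by simp
    ultimately show ?thesis using plo(1)[OF that] by linarith
  qed
  have phi2: "p i \<le> 7/6 * \<pi> i" if "i < n" for i
  proof -
    have "\<beta> * \<pi> i \<le> 7/6 * \<pi> i" using ib \<pi>0 by (intro mult_right_mono) auto
    thus ?thesis using plo(2)[OF that] by simp
  qed
  have ch_lt: "ch i j < n" if "i < n" "j < n" for i j using chosen_mem[of Nw w tb i j] that unfolding ch_def by auto
  have step1: "expected_next_Gamma a n Nw p tb W w
      \<le> (\<Sum>i<n. \<Sum>j<n. p i * p j * (K + a * g (ch i j) + S * a^2 * cc (ch i j)))"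
    unfolding expected_next_Gamma_def
  proof (intro sum_mono mult_left_mono)
    fix i j assume i: "i \<in> {..<n}" and j: "j \<in> {..<n}"
    have "(\<integral>x. Gamma a (slot_vector n Nw (add_ball w (ch i j) x)) \<partial>W) \<le> K + a * g (ch i j) + S * a^2 * cc (ch i j)"
      using integral_step[OF wd S0 a(1) a(3) ch_lt Npos, of i j w] i j
      unfolding K_def Gm_def GG_def g_def cc_def e_def f_def y_def N_def by simp
    thus "(\<integral>x. Gamma a (slot_vector n Nw (add_ball w (chosen_bin Nw w tb i j) x)) \<partial>W) \<le> K + a * g (ch i j) + S * a^2 * cc (ch i j)"
      unfolding ch_def .
    show "0 \<le> p i * p j" using p0 i j by simp
  qed
  have step2: "(\<Sum>i<n. \<Sum>j<n. p i * p j * (K + a * g (ch i j) + S * a^2 * cc (ch i j)))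
     = K + a * (\<Sum>i<n. \<Sum>j<n. p i * p j * g (ch i j)) + S * a^2 * (\<Sum>i<n. \<Sum>j<n. p i * p j * cc (ch i j))"
  proof -
    have "(\<Sum>i<n. \<Sum>j<n. p i * p j * (K + a * g (ch i j) + S * a^2 * cc (ch i j)))
       = (\<Sum>i<n. \<Sum>j<n. p i * p j * K) + a * (\<Sum>i<n. \<Sum>j<n. p i * p j * g (ch i j)) + S * a^2 * (\<Sum>i<n. \<Sum>j<n. p i * p j * cc (ch i j))"
      by (simp add: distrib_left sum.distrib sum_distrib_left mult_ac)
    thus ?thesis using double_sum_const[OF p1, of K] by simp
  qed
  define c0 where "c0 = (\<Sum>k<n. w k) / N"
  have ybv: "y j = bin_value Nw w j - c0" for j unfolding y_def c0_def norm_value_def N_def by simp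
  define G0 where "G0 v = exp (a * (v - c0)) - exp (- a * (v - c0))" for v
  have gG0: "g j = G0 (bin_value Nw w j)" for j unfolding g_def e_def f_def G0_def ybv by simp
  have G0mono: "G0 u \<le> G0 v" if "u \<le> v" for u v
  proof -
    have "a * (u - c0) \<le> a * (v - c0)" using that a by (intro mult_left_mono) auto
    hence "exp (a * (u - c0)) \<le> exp (a * (v - c0))" "exp (- a * (v - c0)) \<le> exp (- a * (u - c0))" by auto
    thus ?thesis unfolding G0_def by linarith
  qed
  have gch: "g (ch i j) = (g i + g j - \<bar>g i - g j\<bar>) / 2" for i j
    unfolding gG0 ch_def using chosen_min[of G0 Nw w tb i j] G0mono min_abs by metis
  have step3: "(\<Sum>i<n. \<Sum>j<n. p i * p j * g (ch i j))
      = (\<Sum>i<n. p i * g i) - 1/2 * (\<Sum>i<n. \<Sum>j<n. p i * p j * \<bar>g i - g j\<bar>)"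
  proof -
    have "(\<Sum>i<n. \<Sum>j<n. p i * p j * g (ch i j))
        = 1/2 * (\<Sum>i<n. \<Sum>j<n. p i * p j * (g i + g j)) - 1/2 * (\<Sum>i<n. \<Sum>j<n. p i * p j * \<bar>g i - g j\<bar>)"
    proof -
      have "(\<Sum>i<n. \<Sum>j<n. p i * p j * g (ch i j))
          = (\<Sum>i<n. \<Sum>j<n. 1/2 * (p i * p j * (g i + g j)) - 1/2 * (p i * p j * \<bar>g i - g j\<bar>))"
        by (intro sum.cong refl) (simp add: gch field_simps)
      also have "\<dots> = 1/2 * (\<Sum>i<n. \<Sum>j<n. p i * p j * (g i + g j)) - 1/2 * (\<Sum>i<n. \<Sum>j<n. p i * p j * \<bar>g i - g j\<bar>)"
        by (simp only: sum_subtractf sum_distrib_left)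
      finally show ?thesis .
    qed
    thus ?thesis using double_sum_sym[OF p1, of g] by simp
  qed
  have cc0: "0 \<le> cc j" for j unfolding cc_def e_def f_def by (simp add: add_nonneg_nonneg)
  have step4: "(\<Sum>i<n. \<Sum>j<n. p i * p j * cc (ch i j)) \<le> 7/3 * (Gm / N)"
  proof -
    have "(\<Sum>i<n. \<Sum>j<n. p i * p j * cc (ch i j)) \<le> (\<Sum>i<n. \<Sum>j<n. p i * p j * (cc i + cc j))"
    proof (intro sum_mono mult_left_mono)
      fix i j assume "i \<in> {..<n}" "j \<in> {..<n}"
      thus "0 \<le> p i * p j" using p0 by simp
      show "cc (ch i j) \<le> cc i + cc j" using chosen_mem[of Nw w tb i j] cc0[of i] cc0[of j] unfolding ch_def by auto
    qed
    also have "\<dots> = 2 * (\<Sum>i<n. p i * cc i)" by (rule double_sum_sym[OF p1])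
    also have "\<dots> \<le> 2 * (\<Sum>i<n. 7/6 * \<pi> i * cc i)"
      using phi2 cc0 by (intro mult_left_mono sum_mono mult_right_mono) auto
    also have "\<dots> = 7/3 * (Gm / N)" unfolding Gm_def \<pi>_def
      by (simp add: sum_distrib_left sum_divide_distrib mult_ac)
    finally show ?thesis .
  qed
  define F where "F j = (\<Sum>i<n. \<pi> i * \<bar>g i - g j\<bar>)" for j
  define D where "D = (\<Sum>i<n. \<Sum>j<n. \<pi> i * \<pi> j * \<bar>g i - g j\<bar>)"
  obtain j0 where j0: "j0 < n" "\<And>j. j < n \<Longrightarrow> F j0 \<le> F j"
  proof -
    have fin: "finite (F ` {..<n})" "F ` {..<n} \<noteq> {}" using n by auto
    obtain j0 where "j0 \<in> {..<n}" "F j0 = Min (F ` {..<n})" using Min_in[OF fin] by auto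
    thus ?thesis using that fin by auto
  qed
  have FD: "F j0 \<le> D"
  proof -
    have "F j0 = (\<Sum>j<n. \<pi> j * F j0)" using \<pi>1 by (simp add: sum_distrib_right[symmetric])
    also have "\<dots> \<le> (\<Sum>j<n. \<pi> j * F j)" using j0 \<pi>0 by (intro sum_mono mult_left_mono) auto
    also have "\<dots> = D" unfolding D_def F_def
      by (subst sum.swap) (simp add: sum_distrib_left mult_ac)
    finally show ?thesis .
  qed
  have step5: "(\<Sum>i<n. p i * g i) - GG / N \<le> 1/6 * D"
  proof -
    have "(\<Sum>i<n. p i * g i) - GG / N = (\<Sum>i<n. (p i - \<pi> i) * (g i - g j0))"
    proof -
      have "(\<Sum>i<n. (p i - \<pi> i) * (g i - g j0)) = (\<Sum>i<n. p i * g i) - (\<Sum>i<n. \<pi> i * g i) - g j0 * ((\<Sum>i<n. p i) - (\<Sum>i<n. \<pi> i))"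
        by (simp add: algebra_simps sum_subtractf sum_distrib_left sum.distrib)
      moreover have "(\<Sum>i<n. \<pi> i * g i) = GG / N" unfolding GG_def \<pi>_def by (simp add: sum_divide_distrib)
      ultimately show ?thesis using p1 \<pi>1 by simp
    qed
    also have "\<dots> \<le> (\<Sum>i<n. 1/6 * \<pi> i * \<bar>g i - g j0\<bar>)"
      by (intro sum_mono dev_bound) (use plo2 phi2 \<pi>0 in auto)
    also have "\<dots> = 1/6 * F j0" unfolding F_def by (simp add: sum_distrib_left mult_ac)
    also have "\<dots> \<le> 1/6 * D" using FD by simp
    finally show ?thesis .
  qed
  have step6: "4/5 * D \<le> (\<Sum>i<n. \<Sum>j<n. p i * p j * \<bar>g i - g j\<bar>)"
  proof -
    have "4/5 * D = (\<Sum>i<n. \<Sum>j<n. 4/5 * (\<pi> i * \<pi> j) * \<bar>g i - g j\<bar>)"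
      unfolding D_def by (simp add: sum_distrib_left mult_ac)
    also have "\<dots> \<le> (\<Sum>i<n. \<Sum>j<n. p i * p j * \<bar>g i - g j\<bar>)"
    proof (intro sum_mono mult_right_mono)
      fix i j assume i: "i \<in> {..<n}" and j: "j \<in> {..<n}"
      have "4/5 * (\<pi> i * \<pi> j) \<le> (1/\<alpha>)^2 * (\<pi> i * \<pi> j)" using ia2 \<pi>0 by (intro mult_right_mono) auto
      also have "\<dots> = (\<pi> i / \<alpha>) * (\<pi> j / \<alpha>)" by (simp add: power2_eq_square)
      also have "\<dots> \<le> p i * p j" using plo(1) i j \<pi>0 al p0 by (intro mult_mono) auto
      finally show "4/5 * (\<pi> i * \<pi> j) \<le> p i * p j" .
    qed simp
    finally show ?thesis .
  qed
  have step7: "(Gm / N - 2) / 2 \<le> D"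
  proof -
    define x where "x j = a * y j" for j
    have m0: "(\<Sum>i<n. \<pi> i * x i) = 0"
    proof -
      have "(\<Sum>i<n. real (Nw i) * y i) = (\<Sum>i<n. w i - real (Nw i) * c0)"
      proof (rule sum.cong[OF refl])
        fix i assume "i \<in> {..<n}"
        hence "real (Nw i) \<noteq> 0" using Nj1[of i] by auto
        thus "real (Nw i) * y i = w i - real (Nw i) * c0" unfolding ybv bin_value_def by (simp add: algebra_simps)
      qed
      also have "\<dots> = (\<Sum>i<n. w i) - (\<Sum>i<n. real (Nw i)) * c0"
        by (simp only: sum_subtractf sum_distrib_right)
      also have "\<dots> = 0" unfolding c0_def Nsum using N1 by simp
      finally have "(\<Sum>i<n. real (Nw i) * y i) = 0" .
      hence "a / N * (\<Sum>i<n. real (Nw i) * y i) = 0" by simp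
      thus ?thesis unfolding \<pi>_def x_def by (simp add: sum_distrib_left mult_ac)
    qed
    have c: "(\<Sum>i<n. \<pi> i * (exp (x i) + exp (- x i) - 2)) / 2
      \<le> (\<Sum>i<n. \<Sum>j<n. \<pi> i * \<pi> j * (\<bar>exp (x i) - exp (x j)\<bar> + \<bar>exp (- x i) - exp (- x j)\<bar>))"
      by (rule core_ineq) (use \<pi>0 \<pi>1 m0 in auto)
    have l: "(\<Sum>i<n. \<pi> i * (exp (x i) + exp (- x i) - 2)) = Gm / N - 2"
    proof -
      have "(\<Sum>i<n. \<pi> i * (exp (x i) + exp (- x i) - 2)) = (\<Sum>i<n. \<pi> i * cc i) - 2 * (\<Sum>i<n. \<pi> i)"
        unfolding cc_def e_def f_def x_def by (simp add: algebra_simps sum_subtractf sum_distrib_left)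
      also have "(\<Sum>i<n. \<pi> i * cc i) = Gm / N" unfolding Gm_def \<pi>_def by (simp add: sum_divide_distrib)
      finally show ?thesis using \<pi>1 by simp
    qed
    have r: "(\<Sum>i<n. \<Sum>j<n. \<pi> i * \<pi> j * (\<bar>exp (x i) - exp (x j)\<bar> + \<bar>exp (- x i) - exp (- x j)\<bar>)) = D"
    proof -
      have sp: "\<bar>exp (a * u) - exp (a * v)\<bar> + \<bar>exp (- (a * u)) - exp (- (a * v))\<bar>
          = \<bar>exp (a * u) - exp (- (a * u)) - (exp (a * v) - exp (- (a * v)))\<bar>" for u v
        using abs_sinh_split[OF a(1), of u v] by simp
      show ?thesis unfolding D_def g_def e_def f_def x_def
        by (intro sum.cong refl) (simp add: sp)
    qed
    show ?thesis using c l r by simp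
  qed
  define Ex where "Ex = expected_next_Gamma a n Nw p tb W w"
  define Q where "Q = (\<Sum>i<n. \<Sum>j<n. p i * p j * \<bar>g i - g j\<bar>)"
  have Ex1: "Ex \<le> K + a * ((\<Sum>i<n. p i * g i) - 1/2 * Q) + S * a^2 * (7/3 * (Gm / N))"
  proof -
    have "S * a^2 * (\<Sum>i<n. \<Sum>j<n. p i * p j * cc (ch i j)) \<le> S * a^2 * (7/3 * (Gm / N))"
      using step4 S0 by (intro mult_left_mono) auto
    thus ?thesis using step1 step2 step3 unfolding Ex_def Q_def by simp
  qed
  have t5: "a * ((\<Sum>i<n. p i * g i) - GG / N) \<le> a * (1/6 * D)" using step5 a by (intro mult_left_mono) auto
  have t6: "a * (4/5 * D) \<le> a * Q" using step6 a unfolding Q_def by (intro mult_left_mono) auto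
  have Ex2: "Ex \<le> Gm + S * a^2 / N^2 * Gm + 7/3 * S * a^2 * (Gm / N) - 7/30 * a * D"
  proof -
    have e1: "K + a * ((\<Sum>i<n. p i * g i) - 1/2 * Q) + S * a^2 * (7/3 * (Gm / N))
       = Gm + S * a^2 / N^2 * Gm + 7/3 * S * a^2 * (Gm / N) + a * ((\<Sum>i<n. p i * g i) - GG / N) - 1/2 * (a * Q)"
      unfolding K_def by (simp add: algebra_simps)
    have e2: "a * (1/6 * D) - 1/2 * (a * (4/5 * D)) = - (7/30 * a * D)" by (simp add: algebra_simps)
    show ?thesis using Ex1 e1 e2 t5 t6 by linarith
  qed
  have Gm0: "0 \<le> Gm" unfolding Gm_def using cc0 by (intro sum_nonneg) simp
  have z: "min (\<mu> / 4) (1 / 60) \<le> 1/60" "0 \<le> min (\<mu> / 4) (1 / 60)" using mu by auto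
  have "Ex \<le> (1 - min (\<mu> / 4) (1 / 60) * a / N) * Gm + a"
    by (rule final_arith[OF Gm0 N1 a(1) S0 aS step7 Ex2 z])
  thus ?thesis unfolding Ex_def N_def Gam .
qed


theorem mainTheorem15:
  fixes \<mu> :: real
  assumes "\<mu> > 0"
  shows "\<exists>C :: real \<Rightarrow> real. \<forall>S :: real. S \<ge> 1 \<longrightarrow>
    (\<exists>a0 > 0. \<forall>a :: real. 0 < a \<and> a \<le> a0 \<longrightarrow>
      (\<forall>(n :: nat) (Nw :: nat \<Rightarrow> nat) (p :: nat \<Rightarrow> real) (\<alpha> :: real) (\<beta> :: real)
          (W :: real measure) (lam :: real) (tb :: nat \<Rightarrow> nat \<Rightarrow> bool) (w :: nat \<Rightarrow> real).
        (\<forall>i<n. 0 < Nw i) \<and> \<alpha> \<ge> 1 \<and> \<beta> \<ge> 1 \<and>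
        is_bin_dist n p \<and> biased n Nw p \<alpha> \<beta> \<and>
        1 / \<alpha>\<^sup>2 \<ge> 4/5 + \<mu> \<and> \<beta>\<^sup>2 \<le> 4/3 - \<mu> \<and>
        weight_dist W lam S \<and> a \<le> lam / 2 \<and>
        (\<forall>i<n. 0 \<le> w i)
        \<longrightarrow> expected_next_Gamma a n Nw p tb W w
            \<le> (1 - min (\<mu> / 4) (1 / 60) * a / real (total_bin_weight n Nw))
                * Gamma a (slot_vector n Nw w) + C a))"
proof (intro exI[of _ "\<lambda>a. a"] allI impI)
  fix S :: real assume S: "S \<ge> 1"
  show "\<exists>a0 > 0. \<forall>a :: real. 0 < a \<and> a \<le> a0 \<longrightarrow>
      (\<forall>(n :: nat) (Nw :: nat \<Rightarrow> nat) (p :: nat \<Rightarrow> real) (\<alpha> :: real) (\<beta> :: real)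
          (W :: real measure) (lam :: real) (tb :: nat \<Rightarrow> nat \<Rightarrow> bool) (w :: nat \<Rightarrow> real).
        (\<forall>i<n. 0 < Nw i) \<and> \<alpha> \<ge> 1 \<and> \<beta> \<ge> 1 \<and>
        is_bin_dist n p \<and> biased n Nw p \<alpha> \<beta> \<and>
        1 / \<alpha>\<^sup>2 \<ge> 4/5 + \<mu> \<and> \<beta>\<^sup>2 \<le> 4/3 - \<mu> \<and>
        weight_dist W lam S \<and> a \<le> lam / 2 \<and>
        (\<forall>i<n. 0 \<le> w i)
        \<longrightarrow> expected_next_Gamma a n Nw p tb W w
            \<le> (1 - min (\<mu> / 4) (1 / 60) * a / real (total_bin_weight n Nw))
                * Gamma a (slot_vector n Nw w) + a)"
  proof (intro exI[of _ "1 / (40 * S)"] conjI allI impI)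
    show "0 < 1 / (40 * S)" using S by simp
    fix a :: real and n Nw p \<alpha> \<beta> W lam tb and w :: "nat \<Rightarrow> real"
    assume a: "0 < a \<and> a \<le> 1 / (40 * S)"
    assume h: "(\<forall>i<n. 0 < Nw i) \<and> \<alpha> \<ge> 1 \<and> \<beta> \<ge> 1 \<and>
        is_bin_dist n p \<and> biased n Nw p \<alpha> \<beta> \<and>
        1 / \<alpha>\<^sup>2 \<ge> 4/5 + \<mu> \<and> \<beta>\<^sup>2 \<le> 4/3 - \<mu> \<and>
        weight_dist W lam S \<and> a \<le> lam / 2 \<and> (\<forall>i<n. 0 \<le> w i)"
    show "expected_next_Gamma a n Nw p tb W w
            \<le> (1 - min (\<mu> / 4) (1 / 60) * a / real (total_bin_weight n Nw))
                * Gamma a (slot_vector n Nw w) + a"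
    proof (cases "n = 0")
      case True
      have "expected_next_Gamma a n Nw p tb W w = 0" unfolding expected_next_Gamma_def True by simp
      moreover have "Gamma a (slot_vector n Nw w) = 0" unfolding Gamma_slot True by simp
      ultimately show ?thesis using a by simp
    next
      case False
      show ?thesis
        by (rule main_bound[where \<alpha>=\<alpha> and \<beta>=\<beta> and S=S and lam=lam and \<mu>=\<mu>]) (use h a S False assms in auto)
    qed
  qed
qed

end
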